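(* Let $\mathfrak g=\mathfrak g_{-1}\oplus\mathfrak g_0\oplus\mathfrak g_1$ be a complex Lie superalgebra with $\dim\mathfrak g_{\bar1}<\infty$ and compatible $\mathbb Z$-grading, and let $V$ be a simple $\mathfrak g_0$-supermodule. Then both $\mathrm{Coind}_{\mathfrak g_{\geq0}}^{\mathfrak g}(V)$ and $\mathrm{Coind}_{\mathfrak g_{\leq0}}^{\mathfrak g}(V)$ have simple socle.
   Context: Compatible grading: $\mathfrak g_0=\mathfrak g_{\bar0}$, $\mathfrak g_{\bar1}=\mathfrak g_{-1}\oplus\mathfrak g_1$, $\mathfrak g_{\pm1}$ $\mathfrak g_0$-submodules, $[\mathfrak g_{\pm1},\mathfrak g_{\pm1}]=0$; $\mathfrak g_{\geq0}=\mathfrak g_0\oplus\mathfrak g_1$, $\mathfrak g_{\leq0}=\mathfrak g_0\oplus\mathfrak g_{-1}$. $\mathrm{Coind}_{\mathfrak g_{\geq0}}^{\mathfrak g}(V)=\{f\in\mathrm{Hom}_{\mathbb C}(U(\mathfrak g),V)\mid f(pu)=pf(u)\ \forall p\in U(\mathfrak g_{\geq0})\}$ with $(xf)(u)=f(ux)$, where $\mathfrak g_1$ acts on $V$ by zero; $\mathrm{Coind}_{\mathfrak g_{\leq0}}^{\mathfrak g}(V)$ analogously with $\mathfrak g_{-1}$ acting by zero. *)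

theory Defs
  imports Complex_Main
begin

(* A complex Lie superalgebra g (= the whole type 'g, with complex scalar
   multiplication sc and bracket br) with a compatible Z-grading
   g = Gm (+) G0 (+) Gp, where Gm = g_{-1}, G0 = g_0 = g_even, Gp = g_1. *)

definition Godd :: "'g::ab_group_add set \<Rightarrow> 'g set \<Rightarrow> 'g set" where
  "Godd Gm Gp = {a + b | a b. a \<in> Gm \<and> b \<in> Gp}"

definition homog :: "'g::ab_group_add set \<Rightarrow> 'g set \<Rightarrow> 'g set \<Rightarrow> 'g \<Rightarrow> bool" where
  "homog G0 Gm Gp x \<longleftrightarrow> x \<in> G0 \<or> x \<in> Godd Gm Gp"

definition ssign :: "'g set \<Rightarrow> 'g \<Rightarrow> 'g \<Rightarrow> complex" where
  "ssign G0 x y = (if x \<notin> G0 \<and> y \<notin> G0 then -1 else 1)"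

definition Zgraded_lie_superalgebra ::
  "(complex \<Rightarrow> 'g::ab_group_add \<Rightarrow> 'g) \<Rightarrow> ('g \<Rightarrow> 'g \<Rightarrow> 'g) \<Rightarrow> 'g set \<Rightarrow> 'g set \<Rightarrow> 'g set \<Rightarrow> bool"
where
  "Zgraded_lie_superalgebra sc br Gm G0 Gp \<longleftrightarrow>
     vector_space sc \<and>
     module.subspace sc Gm \<and> module.subspace sc G0 \<and> module.subspace sc Gp \<and>
     (\<forall>x. \<exists>!t. fst t \<in> Gm \<and> fst (snd t) \<in> G0 \<and> snd (snd t) \<in> Gp \<and>
              x = fst t + fst (snd t) + snd (snd t)) \<and>
     \<comment> \<open>bilinearity of the bracket\<close>
     (\<forall>x y z. br (x + y) z = br x z + br y z) \<and>
     (\<forall>x y z. br x (y + z) = br x y + br x z) \<and>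
     (\<forall>a x y. br (sc a x) y = sc a (br x y)) \<and>
     (\<forall>a x y. br x (sc a y) = sc a (br x y)) \<and>
     \<comment> \<open>compatible Z-grading: [g_i, g_j] \<subseteq> g_{i+j}, g_k = 0 for |k| \<ge> 2\<close>
     (\<forall>x\<in>G0. \<forall>y\<in>G0. br x y \<in> G0) \<and>
     (\<forall>x\<in>G0. \<forall>y\<in>Gm. br x y \<in> Gm \<and> br y x \<in> Gm) \<and>
     (\<forall>x\<in>G0. \<forall>y\<in>Gp. br x y \<in> Gp \<and> br y x \<in> Gp) \<and>
     (\<forall>x\<in>Gm. \<forall>y\<in>Gp. br x y \<in> G0 \<and> br y x \<in> G0) \<and>
     (\<forall>x\<in>Gm. \<forall>y\<in>Gm. br x y = 0) \<and>
     (\<forall>x\<in>Gp. \<forall>y\<in>Gp. br x y = 0) \<and>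
     \<comment> \<open>super antisymmetry and super Jacobi identity for homogeneous elements\<close>
     (\<forall>x y. homog G0 Gm Gp x \<longrightarrow> homog G0 Gm Gp y \<longrightarrow>
        br x y = - sc (ssign G0 x y) (br y x)) \<and>
     (\<forall>x y z. homog G0 Gm Gp x \<longrightarrow> homog G0 Gm Gp y \<longrightarrow> homog G0 Gm Gp z \<longrightarrow>
        br x (br y z) = br (br x y) z + sc (ssign G0 x y) (br y (br x z)))"

definition odd_part_finite_dim :: "(complex \<Rightarrow> 'g::ab_group_add \<Rightarrow> 'g) \<Rightarrow> 'g set \<Rightarrow> 'g set \<Rightarrow> bool" where
  "odd_part_finite_dim sc Gm Gp \<longleftrightarrow> (\<exists>B. finite B \<and> Godd Gm Gp \<subseteq> module.span sc B)"

(* V = the whole type 'v, complex scalar multiplication scV, V = V0 (+) V1,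
   G0-action rho (only its values on G0 matter). *)
definition g0_supermodule ::
  "(complex \<Rightarrow> 'g::ab_group_add \<Rightarrow> 'g) \<Rightarrow> ('g \<Rightarrow> 'g \<Rightarrow> 'g) \<Rightarrow> 'g set \<Rightarrow>
   (complex \<Rightarrow> 'v::ab_group_add \<Rightarrow> 'v) \<Rightarrow> 'v set \<Rightarrow> 'v set \<Rightarrow> ('g \<Rightarrow> 'v \<Rightarrow> 'v) \<Rightarrow> bool"
where
  "g0_supermodule sc br G0 scV V0 V1 rho \<longleftrightarrow>
     vector_space scV \<and> module.subspace scV V0 \<and> module.subspace scV V1 \<and>
     (\<forall>v. \<exists>!p. fst p \<in> V0 \<and> snd p \<in> V1 \<and> v = fst p + snd p) \<and>
     (\<forall>x\<in>G0. \<forall>v w. rho x (v + w) = rho x v + rho x w) \<and>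
     (\<forall>x\<in>G0. \<forall>a v. rho x (scV a v) = scV a (rho x v)) \<and>
     (\<forall>x\<in>G0. \<forall>y\<in>G0. \<forall>v. rho (x + y) v = rho x v + rho y v) \<and>
     (\<forall>x\<in>G0. \<forall>a v. rho (sc a x) v = scV a (rho x v)) \<and>
     (\<forall>x\<in>G0. \<forall>y\<in>G0. \<forall>v. rho (br x y) v = rho x (rho y v) - rho y (rho x v)) \<and>
     (\<forall>x\<in>G0. \<forall>v\<in>V0. rho x v \<in> V0) \<and>
     (\<forall>x\<in>G0. \<forall>v\<in>V1. rho x v \<in> V1)"

definition simple_g0_supermodule ::
  "(complex \<Rightarrow> 'g::ab_group_add \<Rightarrow> 'g) \<Rightarrow> ('g \<Rightarrow> 'g \<Rightarrow> 'g) \<Rightarrow> 'g set \<Rightarrow>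
   (complex \<Rightarrow> 'v::ab_group_add \<Rightarrow> 'v) \<Rightarrow> 'v set \<Rightarrow> 'v set \<Rightarrow> ('g \<Rightarrow> 'v \<Rightarrow> 'v) \<Rightarrow> bool"
where
  "simple_g0_supermodule sc br G0 scV V0 V1 rho \<longleftrightarrow>
     g0_supermodule sc br G0 scV V0 V1 rho \<and> (\<exists>v::'v. v \<noteq> 0) \<and>
     (\<forall>W. module.subspace scV W \<and> (\<forall>x\<in>G0. \<forall>w\<in>W. rho x w \<in> W) \<and>
          (\<forall>w\<in>W. \<exists>a b. a \<in> W \<inter> V0 \<and> b \<in> W \<inter> V1 \<and> w = a + b)
        \<longrightarrow> W = {0} \<or> W = UNIV)"

(* Hom_C(U(g), V): a linear map U(g) \<rightarrow> V is the same as a function f on words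
   (elements of T(g) = tensor algebra), multilinear in each letter, and vanishing on
   the two-sided ideal generated by xy - (-1)^{|x||y|} yx - [x,y]. *)
definition hom_Ug ::
  "(complex \<Rightarrow> 'g::ab_group_add \<Rightarrow> 'g) \<Rightarrow> ('g \<Rightarrow> 'g \<Rightarrow> 'g) \<Rightarrow> 'g set \<Rightarrow> 'g set \<Rightarrow> 'g set \<Rightarrow>
   (complex \<Rightarrow> 'v::ab_group_add \<Rightarrow> 'v) \<Rightarrow> ('g list \<Rightarrow> 'v) \<Rightarrow> bool"
where
  "hom_Ug sc br Gm G0 Gp scV f \<longleftrightarrow>
     (\<forall>u w x y. f (u @ [x + y] @ w) = f (u @ [x] @ w) + f (u @ [y] @ w)) \<and>
     (\<forall>u w a x. f (u @ [sc a x] @ w) = scV a (f (u @ [x] @ w))) \<and>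
     (\<forall>u w x y. homog G0 Gm Gp x \<longrightarrow> homog G0 Gm Gp y \<longrightarrow>
        f (u @ [x, y] @ w) = scV (ssign G0 x y) (f (u @ [y, x] @ w)) + f (u @ [br x y] @ w))"

definition wact :: "'g set \<Rightarrow> ('g \<Rightarrow> 'v::zero \<Rightarrow> 'v) \<Rightarrow> 'g list \<Rightarrow> 'v \<Rightarrow> 'v" where
  "wact G0 rho p v = foldr (\<lambda>x w. if x \<in> G0 then rho x w else 0) p v"

(* Coind_{g_0 + K}^g (V) with K (= g_1 or g_{-1}) acting by zero on V:
   f(p u) = p f(u) for p \<in> U(g_0 + K); U(g_0 + K) is spanned by words in G0 \<union> K. *)
definition Coind ::
  "(complex \<Rightarrow> 'g::ab_group_add \<Rightarrow> 'g) \<Rightarrow> ('g \<Rightarrow> 'g \<Rightarrow> 'g) \<Rightarrow> 'g set \<Rightarrow> 'g set \<Rightarrow> 'g set \<Rightarrow>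
   (complex \<Rightarrow> 'v::ab_group_add \<Rightarrow> 'v) \<Rightarrow> ('g \<Rightarrow> 'v \<Rightarrow> 'v) \<Rightarrow> 'g set \<Rightarrow> ('g list \<Rightarrow> 'v) set"
where
  "Coind sc br Gm G0 Gp scV rho K =
     {f. hom_Ug sc br Gm G0 Gp scV f \<and>
         (\<forall>p u. set p \<subseteq> G0 \<union> K \<longrightarrow> f (p @ u) = wact G0 rho p (f u))}"

definition gact :: "'g \<Rightarrow> ('g list \<Rightarrow> 'v) \<Rightarrow> ('g list \<Rightarrow> 'v)" where
  "gact x f = (\<lambda>u. f (u @ [x]))"

definition fsubspace :: "(complex \<Rightarrow> 'v::ab_group_add \<Rightarrow> 'v) \<Rightarrow> ('a \<Rightarrow> 'v) set \<Rightarrow> bool" where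
  "fsubspace scV W \<longleftrightarrow> (\<lambda>_. 0) \<in> W \<and> (\<forall>f\<in>W. \<forall>g\<in>W. (\<lambda>u. f u + g u) \<in> W) \<and>
                     (\<forall>a. \<forall>f\<in>W. (\<lambda>u. scV a (f u)) \<in> W)"

definition fspan :: "(complex \<Rightarrow> 'v::ab_group_add \<Rightarrow> 'v) \<Rightarrow> ('a \<Rightarrow> 'v) set \<Rightarrow> ('a \<Rightarrow> 'v) set" where
  "fspan scV A = \<Inter>{W. fsubspace scV W \<and> A \<subseteq> W}"

(* Z/2-grading on Hom_C(U(g),V): f has parity b iff it maps homogeneous words of
   parity c into V_{b+c} *)
definition word_odd :: "'g set \<Rightarrow> 'g list \<Rightarrow> bool" where
  "word_odd G0 u = odd (length (filter (\<lambda>x. x \<notin> G0) u))"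

definition has_parity ::
  "'g::ab_group_add set \<Rightarrow> 'g set \<Rightarrow> 'g set \<Rightarrow> 'v set \<Rightarrow> 'v set \<Rightarrow> bool \<Rightarrow> ('g list \<Rightarrow> 'v) \<Rightarrow> bool"
where
  "has_parity Gm G0 Gp V0 V1 b f \<longleftrightarrow>
     (\<forall>u. (\<forall>x\<in>set u. homog G0 Gm Gp x) \<longrightarrow> f u \<in> (if word_odd G0 u = b then V0 else V1))"

definition subsupermod ::
  "'g::ab_group_add set \<Rightarrow> 'g set \<Rightarrow> 'g set \<Rightarrow> (complex \<Rightarrow> 'v::ab_group_add \<Rightarrow> 'v) \<Rightarrow> 'v set \<Rightarrow> 'v set \<Rightarrow>
   ('g list \<Rightarrow> 'v) set \<Rightarrow> ('g list \<Rightarrow> 'v) set \<Rightarrow> bool"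
where
  "subsupermod Gm G0 Gp scV V0 V1 M W \<longleftrightarrow>
     W \<subseteq> M \<and> fsubspace scV W \<and> (\<forall>x. \<forall>f\<in>W. gact x f \<in> W) \<and>
     (\<forall>f\<in>W. \<exists>f0 f1. f0 \<in> W \<and> f1 \<in> W \<and> has_parity Gm G0 Gp V0 V1 False f0 \<and>
                   has_parity Gm G0 Gp V0 V1 True f1 \<and> f = (\<lambda>u. f0 u + f1 u))"

definition simple_subsupermod ::
  "'g::ab_group_add set \<Rightarrow> 'g set \<Rightarrow> 'g set \<Rightarrow> (complex \<Rightarrow> 'v::ab_group_add \<Rightarrow> 'v) \<Rightarrow> 'v set \<Rightarrow> 'v set \<Rightarrow>
   ('g list \<Rightarrow> 'v) set \<Rightarrow> ('g list \<Rightarrow> 'v) set \<Rightarrow> bool"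
where
  "simple_subsupermod Gm G0 Gp scV V0 V1 M S \<longleftrightarrow>
     subsupermod Gm G0 Gp scV V0 V1 M S \<and> S \<noteq> {\<lambda>_. 0} \<and>
     (\<forall>W. subsupermod Gm G0 Gp scV V0 V1 M W \<and> W \<subseteq> S \<longrightarrow> W = {\<lambda>_. 0} \<or> W = S)"

definition socle ::
  "'g::ab_group_add set \<Rightarrow> 'g set \<Rightarrow> 'g set \<Rightarrow> (complex \<Rightarrow> 'v::ab_group_add \<Rightarrow> 'v) \<Rightarrow> 'v set \<Rightarrow> 'v set \<Rightarrow>
   ('g list \<Rightarrow> 'v) set \<Rightarrow> ('g list \<Rightarrow> 'v) set"
where
  "socle Gm G0 Gp scV V0 V1 M = fspan scV (\<Union>{S. simple_subsupermod Gm G0 Gp scV V0 V1 M S})"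

definition has_simple_socle ::
  "'g::ab_group_add set \<Rightarrow> 'g set \<Rightarrow> 'g set \<Rightarrow> (complex \<Rightarrow> 'v::ab_group_add \<Rightarrow> 'v) \<Rightarrow> 'v set \<Rightarrow> 'v set \<Rightarrow>
   ('g list \<Rightarrow> 'v) set \<Rightarrow> bool"
where
  "has_simple_socle Gm G0 Gp scV V0 V1 M \<longleftrightarrow>
     simple_subsupermod Gm G0 Gp scV V0 V1 M (socle Gm G0 Gp scV V0 V1 M)"

end

theory Submission
  imports Defs
begin


locale ctx =
  fixes sc :: "complex \<Rightarrow> 'g::ab_group_add \<Rightarrow> 'g" and br :: "'g \<Rightarrow> 'g \<Rightarrow> 'g"
    and Gm G0 Gp :: "'g set"
    and scV :: "complex \<Rightarrow> 'v::ab_group_add \<Rightarrow> 'v" and V0 V1 :: "'v set"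
    and rho :: "'g \<Rightarrow> 'v \<Rightarrow> 'v"
  assumes ZG: "Zgraded_lie_superalgebra sc br Gm G0 Gp"
    and FD: "odd_part_finite_dim sc Gm Gp"
    and SV: "simple_g0_supermodule sc br G0 scV V0 V1 rho"
begin

sublocale G: vector_space sc using ZG[unfolded Zgraded_lie_superalgebra_def] by blast
sublocale W: vector_space scV using SV by (simp add: simple_g0_supermodule_def g0_supermodule_def)

lemma subm: "G.subspace Gm" using ZG[unfolded Zgraded_lie_superalgebra_def, THEN conjunct2, THEN conjunct1] .
lemma sub0: "G.subspace G0" using ZG[unfolded Zgraded_lie_superalgebra_def, THEN conjunct2, THEN conjunct2, THEN conjunct1] .
lemma subp: "G.subspace Gp" using ZG[unfolded Zgraded_lie_superalgebra_def, THEN conjunct2, THEN conjunct2, THEN conjunct2, THEN conjunct1] .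

lemma dec: "\<exists>!t. fst t \<in> Gm \<and> fst (snd t) \<in> G0 \<and> snd (snd t) \<in> Gp \<and>
              x = fst t + fst (snd t) + snd (snd t)"
proof -
  have "\<forall>x. \<exists>!t. fst t \<in> Gm \<and> fst (snd t) \<in> G0 \<and> snd (snd t) \<in> Gp \<and>
              x = fst t + fst (snd t) + snd (snd t)"
    using ZG[unfolded Zgraded_lie_superalgebra_def] by (elim conjE)
  thus ?thesis by blast
qed

lemma br_addl: "br (x + y) z = br x z + br y z"
  using ZG[unfolded Zgraded_lie_superalgebra_def, THEN conjunct2, THEN conjunct2, THEN conjunct2, THEN conjunct2, THEN conjunct2, THEN conjunct1] by blast
lemma br_addr: "br x (y + z) = br x y + br x z"
  using ZG[unfolded Zgraded_lie_superalgebra_def, THEN conjunct2, THEN conjunct2, THEN conjunct2, THEN conjunct2, THEN conjunct2, THEN conjunct2, THEN conjunct1] by blast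
lemma br_scl: "br (sc a x) y = sc a (br x y)"
  using ZG[unfolded Zgraded_lie_superalgebra_def, THEN conjunct2, THEN conjunct2, THEN conjunct2, THEN conjunct2, THEN conjunct2, THEN conjunct2, THEN conjunct2, THEN conjunct1] by blast
lemma br_scr: "br x (sc a y) = sc a (br x y)"
  using ZG[unfolded Zgraded_lie_superalgebra_def, THEN conjunct2, THEN conjunct2, THEN conjunct2, THEN conjunct2, THEN conjunct2, THEN conjunct2, THEN conjunct2, THEN conjunct2, THEN conjunct1] by blast
lemma br00: "x \<in> G0 \<Longrightarrow> y \<in> G0 \<Longrightarrow> br x y \<in> G0"
  using ZG[unfolded Zgraded_lie_superalgebra_def, THEN conjunct2, THEN conjunct2, THEN conjunct2, THEN conjunct2, THEN conjunct2, THEN conjunct2, THEN conjunct2, THEN conjunct2, THEN conjunct2, THEN conjunct1] by blast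
lemma br0m: "x \<in> G0 \<Longrightarrow> y \<in> Gm \<Longrightarrow> br x y \<in> Gm"
  using ZG[unfolded Zgraded_lie_superalgebra_def, THEN conjunct2, THEN conjunct2, THEN conjunct2, THEN conjunct2, THEN conjunct2, THEN conjunct2, THEN conjunct2, THEN conjunct2, THEN conjunct2, THEN conjunct2, THEN conjunct1] by blast
lemma brm0: "x \<in> G0 \<Longrightarrow> y \<in> Gm \<Longrightarrow> br y x \<in> Gm"
  using ZG[unfolded Zgraded_lie_superalgebra_def, THEN conjunct2, THEN conjunct2, THEN conjunct2, THEN conjunct2, THEN conjunct2, THEN conjunct2, THEN conjunct2, THEN conjunct2, THEN conjunct2, THEN conjunct2, THEN conjunct1] by blast
lemma br0p: "x \<in> G0 \<Longrightarrow> y \<in> Gp \<Longrightarrow> br x y \<in> Gp"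
  using ZG[unfolded Zgraded_lie_superalgebra_def, THEN conjunct2, THEN conjunct2, THEN conjunct2, THEN conjunct2, THEN conjunct2, THEN conjunct2, THEN conjunct2, THEN conjunct2, THEN conjunct2, THEN conjunct2, THEN conjunct2, THEN conjunct1] by blast
lemma brp0: "x \<in> G0 \<Longrightarrow> y \<in> Gp \<Longrightarrow> br y x \<in> Gp"
  using ZG[unfolded Zgraded_lie_superalgebra_def, THEN conjunct2, THEN conjunct2, THEN conjunct2, THEN conjunct2, THEN conjunct2, THEN conjunct2, THEN conjunct2, THEN conjunct2, THEN conjunct2, THEN conjunct2, THEN conjunct2, THEN conjunct1] by blast
lemma brmp: "x \<in> Gm \<Longrightarrow> y \<in> Gp \<Longrightarrow> br x y \<in> G0"
  using ZG[unfolded Zgraded_lie_superalgebra_def, THEN conjunct2, THEN conjunct2, THEN conjunct2, THEN conjunct2, THEN conjunct2, THEN conjunct2, THEN conjunct2, THEN conjunct2, THEN conjunct2, THEN conjunct2, THEN conjunct2, THEN conjunct2, THEN conjunct1] by blast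
lemma brpm: "x \<in> Gm \<Longrightarrow> y \<in> Gp \<Longrightarrow> br y x \<in> G0"
  using ZG[unfolded Zgraded_lie_superalgebra_def, THEN conjunct2, THEN conjunct2, THEN conjunct2, THEN conjunct2, THEN conjunct2, THEN conjunct2, THEN conjunct2, THEN conjunct2, THEN conjunct2, THEN conjunct2, THEN conjunct2, THEN conjunct2, THEN conjunct1] by blast
lemma brmm: "x \<in> Gm \<Longrightarrow> y \<in> Gm \<Longrightarrow> br x y = 0"
  using ZG[unfolded Zgraded_lie_superalgebra_def, THEN conjunct2, THEN conjunct2, THEN conjunct2, THEN conjunct2, THEN conjunct2, THEN conjunct2, THEN conjunct2, THEN conjunct2, THEN conjunct2, THEN conjunct2, THEN conjunct2, THEN conjunct2, THEN conjunct2, THEN conjunct1] by blast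
lemma brpp: "x \<in> Gp \<Longrightarrow> y \<in> Gp \<Longrightarrow> br x y = 0"
  using ZG[unfolded Zgraded_lie_superalgebra_def, THEN conjunct2, THEN conjunct2, THEN conjunct2, THEN conjunct2, THEN conjunct2, THEN conjunct2, THEN conjunct2, THEN conjunct2, THEN conjunct2, THEN conjunct2, THEN conjunct2, THEN conjunct2, THEN conjunct2, THEN conjunct2, THEN conjunct1] by blast
lemma anti: "homog G0 Gm Gp x \<Longrightarrow> homog G0 Gm Gp y \<Longrightarrow> br x y = - sc (ssign G0 x y) (br y x)"
  using ZG[unfolded Zgraded_lie_superalgebra_def, THEN conjunct2, THEN conjunct2, THEN conjunct2, THEN conjunct2, THEN conjunct2, THEN conjunct2, THEN conjunct2, THEN conjunct2, THEN conjunct2, THEN conjunct2, THEN conjunct2, THEN conjunct2, THEN conjunct2, THEN conjunct2, THEN conjunct2, THEN conjunct1] by blast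
lemma jac: "homog G0 Gm Gp x \<Longrightarrow> homog G0 Gm Gp y \<Longrightarrow> homog G0 Gm Gp z \<Longrightarrow>
        br x (br y z) = br (br x y) z + sc (ssign G0 x y) (br y (br x z))"
  using ZG[unfolded Zgraded_lie_superalgebra_def, THEN conjunct2, THEN conjunct2, THEN conjunct2, THEN conjunct2, THEN conjunct2, THEN conjunct2, THEN conjunct2, THEN conjunct2, THEN conjunct2, THEN conjunct2, THEN conjunct2, THEN conjunct2, THEN conjunct2, THEN conjunct2, THEN conjunct2, THEN conjunct2] by blast

lemma sub_0: "G.subspace S \<Longrightarrow> 0 \<in> S"
  and sub_add: "G.subspace S \<Longrightarrow> x \<in> S \<Longrightarrow> y \<in> S \<Longrightarrow> x + y \<in> S"
  and sub_sc: "G.subspace S \<Longrightarrow> x \<in> S \<Longrightarrow> sc a x \<in> S"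
  by (auto simp: G.subspace_def)

lemma sub_neg: "G.subspace S \<Longrightarrow> x \<in> S \<Longrightarrow> - x \<in> S"
  using sub_sc[of S x "-1"] by simp

lemma sub_diff: "G.subspace S \<Longrightarrow> x \<in> S \<Longrightarrow> y \<in> S \<Longrightarrow> x - y \<in> S"
  using sub_add[of S x "-y"] sub_neg by (simp)

lemmas m0 = sub_0[OF subm] and z0 = sub_0[OF sub0] and p0' = sub_0[OF subp]

lemma br_0l[simp]: "br 0 y = 0"
  using br_scl[of 0 0 y] by simp
lemma br_0r[simp]: "br x 0 = 0"
  using br_scr[of x 0 0] by simp
lemma br_negl: "br (- x) y = - br x y"
  using br_addl[of x "-x" y] by (simp add: eq_neg_iff_add_eq_0 add.commute)
lemma br_negr: "br x (- y) = - br x y"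
  using br_addr[of x y "-y"] by (simp add: eq_neg_iff_add_eq_0 add.commute)

definition dec3 where
  "dec3 x = (THE t. fst t \<in> Gm \<and> fst (snd t) \<in> G0 \<and> snd (snd t) \<in> Gp \<and>
              x = fst t + fst (snd t) + snd (snd t))"
definition pm where "pm x = fst (dec3 x)"
definition pz where "pz x = fst (snd (dec3 x))"
definition pp where "pp x = snd (snd (dec3 x))"

lemma proj_mem: "pm x \<in> Gm" "pz x \<in> G0" "pp x \<in> Gp" and proj_sum: "x = pm x + pz x + pp x"
proof -
  have "fst (dec3 x) \<in> Gm \<and> fst (snd (dec3 x)) \<in> G0 \<and> snd (snd (dec3 x)) \<in> Gp \<and>
     x = fst (dec3 x) + fst (snd (dec3 x)) + snd (snd (dec3 x))"
    unfolding dec3_def by (rule theI'[OF dec])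
  thus "pm x \<in> Gm" "pz x \<in> G0" "pp x \<in> Gp" "x = pm x + pz x + pp x"
    by (auto simp: pm_def pz_def pp_def)
qed

lemma proj_uniq:
  assumes "a \<in> Gm" "b \<in> G0" "c \<in> Gp" "x = a + b + c"
  shows "pm x = a" "pz x = b" "pp x = c"
proof -
  have "dec3 x = (a, b, c)"
    unfolding dec3_def by (rule the1_equality[OF dec]) (simp add: assms)
  thus "pm x = a" "pz x = b" "pp x = c" by (auto simp: pm_def pz_def pp_def)
qed

lemma pm_m: "x \<in> Gm \<Longrightarrow> pm x = x" and pz_m: "x \<in> Gm \<Longrightarrow> pz x = 0" and pp_m: "x \<in> Gm \<Longrightarrow> pp x = 0"
  using proj_uniq[of x 0 0 x] z0 p0' by auto
lemma pm_z: "x \<in> G0 \<Longrightarrow> pm x = 0" and pz_z: "x \<in> G0 \<Longrightarrow> pz x = x" and pp_z: "x \<in> G0 \<Longrightarrow> pp x = 0"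
  using proj_uniq[of 0 x 0 x] m0 p0' by auto
lemma pm_p: "x \<in> Gp \<Longrightarrow> pm x = 0" and pz_p: "x \<in> Gp \<Longrightarrow> pz x = 0" and pp_p: "x \<in> Gp \<Longrightarrow> pp x = x"
  using proj_uniq[of 0 0 x x] m0 z0 by auto

lemma proj_lin:
  "pm (sc a x + sc b y) = sc a (pm x) + sc b (pm y)"
  "pz (sc a x + sc b y) = sc a (pz x) + sc b (pz y)"
  "pp (sc a x + sc b y) = sc a (pp x) + sc b (pp y)"
proof -
  have e: "sc a x + sc b y = (sc a (pm x) + sc b (pm y)) + (sc a (pz x) + sc b (pz y)) + (sc a (pp x) + sc b (pp y))"
    apply (subst proj_sum[of x], subst proj_sum[of y])
    by (simp add: G.scale_right_distrib algebra_simps)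
  have "sc a (pm x) + sc b (pm y) \<in> Gm" "sc a (pz x) + sc b (pz y) \<in> G0" "sc a (pp x) + sc b (pp y) \<in> Gp"
    using proj_mem sub_add sub_sc subm sub0 subp by blast+
  from proj_uniq[OF this e] show
  "pm (sc a x + sc b y) = sc a (pm x) + sc b (pm y)"
  "pz (sc a x + sc b y) = sc a (pz x) + sc b (pz y)"
  "pp (sc a x + sc b y) = sc a (pp x) + sc b (pp y)" by auto
qed

lemma proj_add: "pm (x + y) = pm x + pm y" "pz (x + y) = pz x + pz y" "pp (x + y) = pp x + pp y"
  using proj_lin[of 1 x 1 y] by auto
lemma proj_sc: "pm (sc a x) = sc a (pm x)" "pz (sc a x) = sc a (pz x)" "pp (sc a x) = sc a (pp x)"
  using proj_lin[of a x 0 x] by auto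
lemma proj_zero[simp]: "pm 0 = 0" "pz 0 = 0" "pp 0 = 0"
  using pm_m[OF m0] pz_m[OF m0] pp_m[OF m0] by auto
lemma proj_neg: "pm (- x) = - pm x" "pz (- x) = - pz x" "pp (- x) = - pp x"
  using proj_sc[of "-1" x] by auto
lemma proj_idem[simp]: "pm (pm x) = pm x" "pz (pz x) = pz x" "pp (pp x) = pp x"
  "pz (pm x) = 0" "pp (pm x) = 0" "pm (pz x) = 0" "pp (pz x) = 0" "pm (pp x) = 0" "pz (pp x) = 0"
  using proj_mem[of x] pm_m pz_m pp_m pm_z pz_z pp_z pm_p pz_p pp_p by auto

lemma mz_int: "x \<in> Gm \<Longrightarrow> x \<in> G0 \<Longrightarrow> x = 0"
  by (metis pm_m pm_z)
lemma mp_int: "x \<in> Gm \<Longrightarrow> x \<in> Gp \<Longrightarrow> x = 0"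
  by (metis pm_m pm_p)
lemma zp_int: "x \<in> G0 \<Longrightarrow> x \<in> Gp \<Longrightarrow> x = 0"
  by (metis pz_z pz_p)

lemma Godd_iff: "x \<in> Godd Gm Gp \<longleftrightarrow> pz x = 0"
proof
  assume "x \<in> Godd Gm Gp"
  then obtain a b where "a \<in> Gm" "b \<in> Gp" "x = a + b" by (auto simp: Godd_def)
  thus "pz x = 0" using proj_uniq(2)[of a 0 b x] z0 by simp
next
  assume "pz x = 0"
  thus "x \<in> Godd Gm Gp" using proj_sum[of x] proj_mem[of x] by (auto simp: Godd_def)
qed

lemma G0_iff: "x \<in> G0 \<longleftrightarrow> pm x = 0 \<and> pp x = 0"
  by (metis add.left_neutral add.right_neutral pm_z pp_z proj_mem(2) proj_sum)

lemma homog_iff: "homog G0 Gm Gp x \<longleftrightarrow> x \<in> G0 \<or> pz x = 0"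
  by (simp add: homog_def Godd_iff)

lemma odd_sum: "pz x = 0 \<Longrightarrow> x = pm x + pp x"
  using proj_sum[of x] by simp

lemma ssign_simp: "ssign G0 x y = (if x \<notin> G0 \<and> y \<notin> G0 then -1 else 1)"
  by (simp add: ssign_def)

lemma anti_even: "x \<in> G0 \<Longrightarrow> homog G0 Gm Gp y \<Longrightarrow> br x y = - br y x"
  using anti[of x y] by (simp add: homog_def ssign_def)
lemma anti_even2: "x \<in> G0 \<Longrightarrow> homog G0 Gm Gp y \<Longrightarrow> br y x = - br x y"
  using anti_even by (metis minus_minus)
lemma odd_G0: "pz x = 0 \<Longrightarrow> x \<in> G0 \<Longrightarrow> x = 0"
  using G0_iff odd_sum by fastforce
lemma anti_odd: "pz x = 0 \<Longrightarrow> pz y = 0 \<Longrightarrow> br x y = br y x"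
proof -
  assume a: "pz x = 0" "pz y = 0"
  show ?thesis
  proof (cases "x \<in> G0 \<or> y \<in> G0")
    case True hence "x = 0 \<or> y = 0" using odd_G0 a by blast
    thus ?thesis by auto
  next
    case False
    hence "br x y = - sc (-1) (br y x)" using anti[of x y] a by (simp add: homog_iff ssign_def)
    thus ?thesis by simp
  qed
qed

lemma jac_even: "x \<in> G0 \<Longrightarrow> homog G0 Gm Gp y \<Longrightarrow> homog G0 Gm Gp z \<Longrightarrow>
        br x (br y z) = br (br x y) z + br y (br x z)"
  using jac[of x y z] by (simp add: homog_def ssign_def)
lemma jac_even2: "y \<in> G0 \<Longrightarrow> homog G0 Gm Gp x \<Longrightarrow> homog G0 Gm Gp z \<Longrightarrow>
        br x (br y z) = br (br x y) z + br y (br x z)"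
  using jac[of x y z] by (simp add: homog_def ssign_def)
lemma jac_odd: "pz x = 0 \<Longrightarrow> pz y = 0 \<Longrightarrow> homog G0 Gm Gp z \<Longrightarrow>
        br x (br y z) = br (br x y) z - br y (br x z)"
proof -
  assume a: "pz x = 0" "pz y = 0" "homog G0 Gm Gp z"
  show ?thesis
  proof (cases "x \<in> G0 \<or> y \<in> G0")
    case True hence "x = 0 \<or> y = 0" using odd_G0 a by blast
    thus ?thesis by auto
  next
    case False
    thus ?thesis using jac[of x y z] a by (simp add: homog_iff ssign_def)
  qed
qed

lemma m_homog: "x \<in> Gm \<Longrightarrow> homog G0 Gm Gp x" and p_homog: "x \<in> Gp \<Longrightarrow> homog G0 Gm Gp x"
  and z_homog: "x \<in> G0 \<Longrightarrow> homog G0 Gm Gp x"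
  by (auto simp: homog_iff pz_m pz_p)
lemma m_odd: "x \<in> Gm \<Longrightarrow> pz x = 0" and p_odd: "x \<in> Gp \<Longrightarrow> pz x = 0"
  by (auto simp: pz_m pz_p)

lemma V0sub: "W.subspace V0" and V1sub: "W.subspace V1"
  and decV: "\<exists>!p. fst p \<in> V0 \<and> snd p \<in> V1 \<and> v = fst p + snd p"
  and rho_add: "x \<in> G0 \<Longrightarrow> rho x (v + w) = rho x v + rho x w"
  and rho_sc: "x \<in> G0 \<Longrightarrow> rho x (scV a v) = scV a (rho x v)"
  and rho_addl: "x \<in> G0 \<Longrightarrow> y \<in> G0 \<Longrightarrow> rho (x + y) v = rho x v + rho y v"
  and rho_scl: "x \<in> G0 \<Longrightarrow> rho (sc a x) v = scV a (rho x v)"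
  and rho_br: "x \<in> G0 \<Longrightarrow> y \<in> G0 \<Longrightarrow> rho (br x y) v = rho x (rho y v) - rho y (rho x v)"
  and rho_V0: "x \<in> G0 \<Longrightarrow> v \<in> V0 \<Longrightarrow> rho x v \<in> V0"
  and rho_V1: "x \<in> G0 \<Longrightarrow> v \<in> V1 \<Longrightarrow> rho x v \<in> V1"
  using SV by (simp_all add: simple_g0_supermodule_def g0_supermodule_def)

lemma V_nonzero: "\<exists>v::'v. v \<noteq> 0"
  and V_simple: "W.subspace U \<Longrightarrow> (\<forall>x\<in>G0. \<forall>w\<in>U. rho x w \<in> U) \<Longrightarrow>
          (\<forall>w\<in>U. \<exists>a b. a \<in> U \<inter> V0 \<and> b \<in> U \<inter> V1 \<and> w = a + b) \<Longrightarrow> U = {0} \<or> U = UNIV"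
  using SV by (simp_all add: simple_g0_supermodule_def)

lemma wsub_0: "W.subspace S \<Longrightarrow> 0 \<in> S"
  and wsub_add: "W.subspace S \<Longrightarrow> x \<in> S \<Longrightarrow> y \<in> S \<Longrightarrow> x + y \<in> S"
  and wsub_sc: "W.subspace S \<Longrightarrow> x \<in> S \<Longrightarrow> scV a x \<in> S"
  by (auto simp: W.subspace_def)

lemma V01_int: "v \<in> V0 \<Longrightarrow> v \<in> V1 \<Longrightarrow> v = 0"
proof -
  assume a: "v \<in> V0" "v \<in> V1"
  have 1: "fst (v, 0) \<in> V0 \<and> snd (v, 0) \<in> V1 \<and> v = fst (v, 0) + snd (v, 0)"
    using a wsub_0[OF V1sub] by simp
  have 2: "fst (0, v) \<in> V0 \<and> snd (0, v) \<in> V1 \<and> v = fst (0, v) + snd (0, v)"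
    using a wsub_0[OF V0sub] by simp
  have "(v, 0) = (0::'v, v)" using decV[of v] 1 2 by blast
  thus ?thesis by simp
qed

lemma rho_zero: "x \<in> G0 \<Longrightarrow> rho x 0 = 0"
  using rho_sc[of x 0 0] by simp
lemma rho_0: "rho 0 v = 0"
  using rho_scl[of 0 0 v] z0 by simp

end


context ctx begin

abbreviation hU where "hU f \<equiv> hom_Ug sc br Gm G0 Gp scV f"
abbreviation MM where "MM \<equiv> Coind sc br Gm G0 Gp scV rho Gp"
abbreviation hom where "hom x \<equiv> homog G0 Gm Gp x"

lemma hU_add: "hU f \<Longrightarrow> f (u @ [x + y] @ w) = f (u @ [x] @ w) + f (u @ [y] @ w)"
  and hU_sc: "hU f \<Longrightarrow> f (u @ [sc a x] @ w) = scV a (f (u @ [x] @ w))"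
  and hU_rel: "hU f \<Longrightarrow> hom x \<Longrightarrow> hom y \<Longrightarrow>
        f (u @ [x, y] @ w) = scV (ssign G0 x y) (f (u @ [y, x] @ w)) + f (u @ [br x y] @ w)"
  unfolding hom_Ug_def by blast+

lemma hU_zero: "hU f \<Longrightarrow> f (u @ [0] @ w) = 0"
  using hU_sc[of f u 0 0 w] by simp

lemma hU_neg: "hU f \<Longrightarrow> f (u @ [- x] @ w) = - f (u @ [x] @ w)"
  using hU_sc[of f u "-1" x w] by simp

lemma hU_rel_mm: assumes "hU f" "x \<in> Gm" "y \<in> Gm"
  shows "f (u @ [x, y] @ w) = - f (u @ [y, x] @ w)"
proof (cases "x = 0 \<or> y = 0")
  case True
  thus ?thesis using hU_zero[OF assms(1), of u] hU_zero[OF assms(1), of "u @ [x]" w]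
     hU_zero[OF assms(1), of "u @ [y]" w] by auto
next
  case False
  hence "x \<notin> G0" "y \<notin> G0" using mz_int assms by auto
  thus ?thesis using hU_rel[OF assms(1) m_homog[OF assms(2)] m_homog[OF assms(3)], of u w]
    brmm[OF assms(2,3)] hU_zero[OF assms(1), of u w] by (simp add: ssign_def)
qed

lemma neg_self_zero: "(v::'v) = - v \<Longrightarrow> v = 0"
proof -
  assume "v = - v"
  hence "v + v = 0" by (metis add.right_inverse)
  hence "scV 2 v = 0" using W.scale_left_distrib[of 1 1 v] by simp
  hence "scV (1/2) (scV 2 v) = 0" by simp
  thus "v = 0" by simp
qed

lemma hU_cc: "hU f \<Longrightarrow> x \<in> Gm \<Longrightarrow> f (u @ [x, x] @ w) = 0"
  using hU_rel_mm[of f x x u w] neg_self_zero by blast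

lemma MM_iff: "f \<in> MM \<longleftrightarrow> hU f \<and> (\<forall>p u. set p \<subseteq> G0 \<union> Gp \<longrightarrow> f (p @ u) = wact G0 rho p (f u))"
  by (simp add: Coind_def)

lemma MM_hU: "f \<in> MM \<Longrightarrow> hU f" by (simp add: MM_iff)

lemma MM_front0: "f \<in> MM \<Longrightarrow> x \<in> G0 \<Longrightarrow> f (x # u) = rho x (f u)"
  using MM_iff[of f] by (auto simp: wact_def dest: spec[where x="[x]"])

lemma MM_frontp: "f \<in> MM \<Longrightarrow> x \<in> Gp \<Longrightarrow> x \<notin> G0 \<Longrightarrow> f (x # u) = 0"
  using MM_iff[of f] by (auto simp: wact_def dest: spec[where x="[x]"])

lemma hU_intro:
  assumes "\<And>u w x y. f (u @ [x + y] @ w) = f (u @ [x] @ w) + f (u @ [y] @ w)"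
    and "\<And>u w a x. f (u @ [sc a x] @ w) = scV a (f (u @ [x] @ w))"
    and "\<And>u w x y. hom x \<Longrightarrow> hom y \<Longrightarrow>
        f (u @ [x, y] @ w) = scV (ssign G0 x y) (f (u @ [y, x] @ w)) + f (u @ [br x y] @ w)"
  shows "hU f"
  unfolding hom_Ug_def using assms by blast

lemma hU_gact: assumes "hU f" shows "hU (gact x f)"
  unfolding gact_def
proof (rule hU_intro)
  fix u w a b c show "f ((u @ [a + b] @ w) @ [x]) = f ((u @ [a] @ w) @ [x]) + f ((u @ [b] @ w) @ [x])"
    using hU_add[OF assms, of u a b "w @ [x]"] by simp
  show "f ((u @ [sc c a] @ w) @ [x]) = scV c (f ((u @ [a] @ w) @ [x]))"
    using hU_sc[OF assms, of u c a "w @ [x]"] by simp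
  assume "hom a" "hom b"
  show "f ((u @ [a, b] @ w) @ [x]) = scV (ssign G0 a b) (f ((u @ [b, a] @ w) @ [x])) + f ((u @ [br a b] @ w) @ [x])"
    using hU_rel[OF assms \<open>hom a\<close> \<open>hom b\<close>, of u "w @ [x]"] by simp
qed

lemma MM_gact: "f \<in> MM \<Longrightarrow> gact x f \<in> MM"
  by (simp add: MM_iff hU_gact) (simp add: gact_def)

definition lcF :: "complex \<Rightarrow> ('a \<Rightarrow> 'v) \<Rightarrow> complex \<Rightarrow> ('a \<Rightarrow> 'v) \<Rightarrow> 'a \<Rightarrow> 'v" where
  "lcF a f b g = (\<lambda>u. scV a (f u) + scV b (g u))"

lemma hU_lc: assumes "hU f" "hU g" shows "hU (lcF a f b g)"
  unfolding lcF_def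
proof (rule hU_intro)
  fix u w x y c
  show "scV a (f (u @ [x + y] @ w)) + scV b (g (u @ [x + y] @ w)) =
    scV a (f (u @ [x] @ w)) + scV b (g (u @ [x] @ w)) + (scV a (f (u @ [y] @ w)) + scV b (g (u @ [y] @ w)))"
    by (subst hU_add[OF assms(1)], subst hU_add[OF assms(2)]) (simp add: W.scale_right_distrib)
  show "scV a (f (u @ [sc c x] @ w)) + scV b (g (u @ [sc c x] @ w)) =
    scV c (scV a (f (u @ [x] @ w)) + scV b (g (u @ [x] @ w)))"
    by (subst hU_sc[OF assms(1)], subst hU_sc[OF assms(2)]) (simp add: W.scale_right_distrib mult.commute)
  assume h: "hom x" "hom y"
  show "scV a (f (u @ [x, y] @ w)) + scV b (g (u @ [x, y] @ w)) =
    scV (ssign G0 x y) (scV a (f (u @ [y, x] @ w)) + scV b (g (u @ [y, x] @ w))) +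
    (scV a (f (u @ [br x y] @ w)) + scV b (g (u @ [br x y] @ w)))"
    apply (subst hU_rel[OF assms(1) h], subst hU_rel[OF assms(2) h])
    by (simp add: W.scale_right_distrib mult.commute)
qed

lemma wact_lc: "wact G0 rho p (scV a v + scV b w) = scV a (wact G0 rho p v) + scV b (wact G0 rho p w)"
  by (induction p) (auto simp: wact_def rho_add rho_sc)

lemma MM_lc: "f \<in> MM \<Longrightarrow> g \<in> MM \<Longrightarrow> lcF a f b g \<in> MM"
  unfolding MM_iff using hU_lc wact_lc by (simp add: lcF_def)

lemma wact_zero: "wact G0 rho p 0 = 0"
  by (induction p) (auto simp: wact_def rho_zero)

lemma MM_zero: "(\<lambda>_. 0) \<in> MM"
  unfolding MM_iff by (auto intro!: hU_intro simp: wact_zero)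

lemma word_odd_append: "word_odd G0 (a @ b) = (word_odd G0 a \<noteq> word_odd G0 b)"
  by (simp add: word_odd_def)
lemma word_odd_Cons: "word_odd G0 (x # b) = ((x \<notin> G0) \<noteq> word_odd G0 b)"
  by (simp add: word_odd_def)
lemma word_odd_Nil[simp]: "word_odd G0 [] = False"
  by (simp add: word_odd_def)

lemma parity_gact: assumes "hom x" "has_parity Gm G0 Gp V0 V1 c f"
  shows "has_parity Gm G0 Gp V0 V1 (c \<noteq> (x \<notin> G0)) (gact x f)"
  unfolding has_parity_def gact_def
proof (intro allI impI)
  fix u assume "\<forall>y\<in>set u. hom y"
  hence "\<forall>y\<in>set (u @ [x]). hom y" using assms(1) by auto
  hence "f (u @ [x]) \<in> (if word_odd G0 (u @ [x]) = c then V0 else V1)"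
    using assms(2) by (simp add: has_parity_def)
  thus "f (u @ [x]) \<in> (if word_odd G0 u = (c \<noteq> (x \<notin> G0)) then V0 else V1)"
    by (cases "x \<in> G0"; cases "word_odd G0 u"; cases c) (auto simp: word_odd_append word_odd_Cons)
qed

lemma parity_lc: "has_parity Gm G0 Gp V0 V1 c f \<Longrightarrow> has_parity Gm G0 Gp V0 V1 c g \<Longrightarrow>
   has_parity Gm G0 Gp V0 V1 c (lcF a f b g)"
  unfolding has_parity_def lcF_def
  using wsub_add wsub_sc V0sub V1sub by (simp split: if_splits)

definition wt :: "'g \<Rightarrow> nat" where
  "wt x = (if x \<in> Gm then 0 else if x \<in> G0 \<union> Gp then 1 else 2)"
fun cost :: "'g list \<Rightarrow> nat" where
  "cost [] = 0"
| "cost (x # r) = wt x + cost r + sum_list (map wt r)"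

lemma cost_append: "cost (w @ l) = cost w + cost l + length w * sum_list (map wt l)"
  by (induction w) (auto simp: algebra_simps)

lemma cost_mono: assumes "wt c < wt d" shows "cost (w @ [c] @ r) < cost (w @ [d] @ r)"
proof -
  show ?thesis
    apply (simp add: cost_append)
    apply (rule add_less_le_mono)
    using assms by auto
qed

lemma cost_swap: "wt y < wt x \<Longrightarrow> cost (w @ [x, y] @ r) < cost (w @ [y, x] @ r)"
  by (simp add: cost_append add_ac)

lemma NO:
  assumes hM: "h \<in> MM" and T0: "W.subspace T0" and T1: "W.subspace T1"
    and R0: "\<forall>x\<in>G0. \<forall>v\<in>T0. rho x v \<in> T0" and R1: "\<forall>x\<in>G0. \<forall>v\<in>T1. rho x v \<in> T1"
    and base: "\<forall>w. set w \<subseteq> Gm \<longrightarrow> h w \<in> (if word_odd G0 w then T1 else T0)"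
  shows "(\<forall>x\<in>set u. hom x) \<longrightarrow> h u \<in> (if word_odd G0 u then T1 else T0)"
proof (induction u rule: wf_induct[OF wf_measures[of "[length, cost]"]])
  case (1 u)
  let ?T = "\<lambda>c. if c then T1 else T0"
  have Tsub: "W.subspace (?T c)" for c using T0 T1 by simp
  have TR: "x \<in> G0 \<Longrightarrow> v \<in> ?T c \<Longrightarrow> rho x v \<in> ?T c" for x v c using R0 R1 by auto
  have hU: "hU h" using hM MM_hU by blast
  have IH: "\<And>u'. (length u' < length u \<or> (length u' = length u \<and> cost u' < cost u)) \<Longrightarrow>
      (\<forall>x\<in>set u'. hom x) \<Longrightarrow> h u' \<in> ?T (word_odd G0 u')"
    using 1 by (auto simp: in_measures)
  show ?case
  proof
    assume homs: "\<forall>x\<in>set u. hom x"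
    show "h u \<in> ?T (word_odd G0 u)"
    proof (cases "set u \<subseteq> Gm")
      case True thus ?thesis using base by blast
    next
      case False
      then obtain w x r where u: "u = w @ x # r" and xn: "x \<notin> Gm" and wm: "\<forall>y\<in>set w. y \<notin> (- Gm)"
        using split_list_first_propE[of u "\<lambda>y. y \<in> - Gm"] by blast
      have wm': "set w \<subseteq> Gm" using wm by auto
      have xh: "hom x" using homs u by auto
      show ?thesis
      proof (cases "x \<in> G0 \<union> Gp")
        case False
        hence pzx: "pz x = 0" and xn0: "x \<notin> G0" using xh by (auto simp: homog_iff)
        have xs: "x = pm x + pp x" using odd_sum[OF pzx] .
        have pmn: "pm x \<noteq> 0" using xs proj_mem(3)[of x] False by auto
        have ppn: "pp x \<noteq> 0" using xs proj_mem(1)[of x] xn by auto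
        have pmn0: "pm x \<notin> G0" using pmn mz_int proj_mem(1) by blast
        have ppn0: "pp x \<notin> G0" using ppn zp_int proj_mem(3) by blast
        have wx: "wt x = 2" using False xn by (simp add: wt_def)
        have w1: "wt (pm x) = 0" using proj_mem(1) by (simp add: wt_def)
        have w2: "wt (pp x) \<le> 1" using proj_mem(3) by (simp add: wt_def)
        have e: "h u = h (w @ [pm x] @ r) + h (w @ [pp x] @ r)"
          using hU_add[OF hU, of w "pm x" "pp x" r] xs u by simp
        have o1: "word_odd G0 (w @ [pm x] @ r) = word_odd G0 u"
          using u pmn0 xn0 by (simp add: word_odd_append word_odd_Cons)
        have o2: "word_odd G0 (w @ [pp x] @ r) = word_odd G0 u"
          using u ppn0 xn0 by (simp add: word_odd_append word_odd_Cons)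
        have c1: "cost (w @ [pm x] @ r) < cost u" using cost_mono[of "pm x" x w r] u w1 wx by simp
        have c2: "cost (w @ [pp x] @ r) < cost u" using cost_mono[of "pp x" x w r] u w2 wx by simp
        have h1: "hom (pm x)" "hom (pp x)" using m_homog p_homog proj_mem by auto
        have "h (w @ [pm x] @ r) \<in> ?T (word_odd G0 u)"
          using IH[of "w @ [pm x] @ r"] c1 u homs h1 o1 by auto
        moreover have "h (w @ [pp x] @ r) \<in> ?T (word_odd G0 u)"
          using IH[of "w @ [pp x] @ r"] c2 u homs h1 o2 by auto
        ultimately show ?thesis using e wsub_add[OF Tsub] by simp
      next
        case True note xin = True
        show ?thesis
        proof (cases w rule: rev_cases)
          case Nil
          hence u': "u = x # r" using u by simp
          have IHr: "h r \<in> ?T (word_odd G0 r)" using IH[of r] u' homs by auto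
          show ?thesis
          proof (cases "x \<in> G0")
            case True
            thus ?thesis using MM_front0[OF hM True, of r] u' TR[OF True IHr]
              by (simp add: word_odd_Cons)
          next
            case False
            thus ?thesis using MM_frontp[OF hM _ False, of r] u' xin wsub_0[OF Tsub] by auto
          qed
        next
          case (snoc w' y)
          have ym: "y \<in> Gm" using snoc wm' by auto
          have uu: "u = w' @ [y, x] @ r" using u snoc by simp
          show ?thesis
          proof (cases "y = 0")
            case True thus ?thesis using hU_zero[OF hU, of w' "x # r"] uu wsub_0[OF Tsub] by simp
          next
            case False
            have yn0: "y \<notin> G0" using False ym mz_int by blast
            have yh: "hom y" using m_homog ym by blast
            have e: "h u = scV (ssign G0 y x) (h (w' @ [x, y] @ r)) + h (w' @ [br y x] @ r)"
              using hU_rel[OF hU yh xh, of w' r] uu by simp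
            have c: "cost (w' @ [x, y] @ r) < cost u"
              using cost_swap[of y x w' r] uu ym xin xn by (simp add: wt_def)
            have o: "word_odd G0 (w' @ [x, y] @ r) = word_odd G0 u"
              using uu by (cases "x \<in> G0"; cases "y \<in> G0") (auto simp: word_odd_append word_odd_Cons)
            have t1: "h (w' @ [x, y] @ r) \<in> ?T (word_odd G0 u)"
              using IH[of "w' @ [x, y] @ r"] c uu homs o by auto
            have bh: "hom (br y x)" and bo: "br y x \<noteq> 0 \<Longrightarrow> ((br y x) \<notin> G0) = ((y \<notin> G0) \<noteq> (x \<notin> G0))"
            proof -
              show "hom (br y x)"
              proof (cases "x \<in> G0")
                case True thus ?thesis using brm0[OF True ym] m_homog by blast
              next
                case False hence "x \<in> Gp" using xin by blast
                thus ?thesis using brmp[OF ym] z_homog by blast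
              qed
              show "br y x \<noteq> 0 \<Longrightarrow> ((br y x) \<notin> G0) = ((y \<notin> G0) \<noteq> (x \<notin> G0))"
              proof (cases "x \<in> G0")
                case True thus "br y x \<noteq> 0 \<Longrightarrow> ?thesis" using brm0[OF True ym] mz_int yn0 by blast
              next
                case False hence "x \<in> Gp" using xin by blast
                thus "br y x \<noteq> 0 \<Longrightarrow> ?thesis" using brmp[OF ym] yn0 False by blast
              qed
            qed
            have t2: "h (w' @ [br y x] @ r) \<in> ?T (word_odd G0 u)"
            proof (cases "br y x = 0")
              case True thus ?thesis using hU_zero[OF hU] wsub_0[OF Tsub] by simp
            next
              case False
              have o2: "word_odd G0 (w' @ [br y x] @ r) = word_odd G0 u"
                using uu bo[OF False] by (cases "x \<in> G0"; cases "y \<in> G0"; cases "br y x \<in> G0") (auto simp: word_odd_append word_odd_Cons)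
              show ?thesis using IH[of "w' @ [br y x] @ r"] uu homs bh o2 by auto
            qed
            show ?thesis using e t1 t2 wsub_add[OF Tsub] wsub_sc[OF Tsub] by simp
          qed
        qed
      qed
    qed
  qed
qed

lemma NH:
  assumes hU: "hU h" and hz: "\<forall>u. (\<forall>x\<in>set u. hom x) \<longrightarrow> h u = 0"
  shows "h u = 0"
proof (induction "length (filter (\<lambda>x. \<not> hom x) u)" arbitrary: u rule: less_induct)
  case less
  show ?case
  proof (cases "\<forall>x\<in>set u. hom x")
    case True thus ?thesis using hz by blast
  next
    case False
    then obtain w x r where u: "u = w @ x # r" and xn: "\<not> hom x"
      using split_list_first_propE[of u "\<lambda>y. \<not> hom y"] by blast
    have xs: "x = pz x + (pm x + pp x)" using proj_sum[of x] by (simp add: algebra_simps)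
    have h1: "hom (pz x)" using z_homog proj_mem by blast
    have h2: "hom (pm x + pp x)" by (simp add: homog_iff proj_add)
    have e: "h u = h (w @ [pz x] @ r) + h (w @ [pm x + pp x] @ r)"
      using hU_add[OF hU, of w "pz x" "pm x + pp x" r] xs u by simp
    have "h (w @ [pz x] @ r) = 0" using less[of "w @ [pz x] @ r"] u xn h1 by simp
    moreover have "h (w @ [pm x + pp x] @ r) = 0" using less[of "w @ [pm x + pp x] @ r"] u xn h2 by simp
    ultimately show ?thesis using e by simp
  qed
qed

lemma W_zero_sub: "W.subspace {0}"
  by (simp add: W.subspace_def)

lemma E_zero:
  assumes "h \<in> MM" "\<forall>w. set w \<subseteq> Gm \<longrightarrow> h w = 0"
  shows "h = (\<lambda>_. 0)"
proof -
  have "(\<forall>x\<in>set u. hom x) \<longrightarrow> h u \<in> (if word_odd G0 u then {0} else {0})" for u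
    by (rule NO[OF assms(1) W_zero_sub W_zero_sub]) (use assms(2) rho_zero in auto)
  hence "\<forall>u. (\<forall>x\<in>set u. hom x) \<longrightarrow> h u = 0" by simp
  hence "h u = 0" for u using NH[OF MM_hU[OF assms(1)]] by blast
  thus ?thesis by auto
qed

lemma E:
  assumes "f \<in> MM" "g \<in> MM" "\<forall>w. set w \<subseteq> Gm \<longrightarrow> f w = g w"
  shows "f = g"
proof -
  have e: "lcF 1 f (-1) g = (\<lambda>u. f u - g u)" by (simp add: lcF_def)
  have "lcF 1 f (-1) g = (\<lambda>_. 0)"
  proof (rule E_zero)
    show "lcF 1 f (-1) g \<in> MM" by (rule MM_lc[OF assms(1,2)])
    show "\<forall>w. set w \<subseteq> Gm \<longrightarrow> lcF 1 f (- 1) g w = 0" using assms(3) e by simp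
  qed
  hence "f u - g u = 0" for u using e by metis
  thus ?thesis by auto
qed

end


context ctx begin

definition Yop :: "'g \<Rightarrow> ('g list \<Rightarrow> 'v) \<Rightarrow> 'g list \<Rightarrow> 'v" where
  "Yop y \<phi> = (\<lambda>w. \<phi> (w @ [y]))"

primrec Hr :: "'g \<Rightarrow> ('g list \<Rightarrow> 'v) \<Rightarrow> 'g list \<Rightarrow> 'v" where
  "Hr h \<phi> [] = rho (pz h) (\<phi> [])"
| "Hr h \<phi> (y # r) = Hr h (Yop y \<phi>) r + \<phi> (rev r @ [br y (pz h)])"

definition Hop :: "'g \<Rightarrow> ('g list \<Rightarrow> 'v) \<Rightarrow> 'g list \<Rightarrow> 'v" where
  "Hop h \<phi> = (\<lambda>w. Hr h \<phi> (rev (map pm w)))"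

primrec Zr :: "'g \<Rightarrow> ('g list \<Rightarrow> 'v) \<Rightarrow> 'g list \<Rightarrow> 'v" where
  "Zr z \<phi> [] = 0"
| "Zr z \<phi> (y # r) = - Zr z (Yop y \<phi>) r + Hop (br y (pp z)) \<phi> (rev r)"

definition Zop :: "'g \<Rightarrow> ('g list \<Rightarrow> 'v) \<Rightarrow> 'g list \<Rightarrow> 'v" where
  "Zop z \<phi> = (\<lambda>w. Zr z \<phi> (rev (map pm w)))"

definition Phi :: "('g list \<Rightarrow> 'v) \<Rightarrow> bool" where
  "Phi \<phi> \<longleftrightarrow> (\<forall>u r a b x y. \<phi> (u @ [sc a x + sc b y] @ r) = scV a (\<phi> (u @ [x] @ r)) + scV b (\<phi> (u @ [y] @ r)))
      \<and> (\<forall>u r x y. x \<in> Gm \<longrightarrow> y \<in> Gm \<longrightarrow> \<phi> (u @ [x, y] @ r) = - \<phi> (u @ [y, x] @ r))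
      \<and> (\<forall>w. \<phi> (map pm w) = \<phi> w)"

lemma Phi_lin: "Phi \<phi> \<Longrightarrow> \<phi> (u @ [sc a x + sc b y] @ r) = scV a (\<phi> (u @ [x] @ r)) + scV b (\<phi> (u @ [y] @ r))"
  and Phi_anti: "Phi \<phi> \<Longrightarrow> x \<in> Gm \<Longrightarrow> y \<in> Gm \<Longrightarrow> \<phi> (u @ [x, y] @ r) = - \<phi> (u @ [y, x] @ r)"
  and Phi_norm: "Phi \<phi> \<Longrightarrow> \<phi> (map pm w) = \<phi> w"
  unfolding Phi_def by blast+

lemma PhiI:
  assumes "\<And>u r a b x y. \<phi> (u @ [sc a x + sc b y] @ r) = scV a (\<phi> (u @ [x] @ r)) + scV b (\<phi> (u @ [y] @ r))"
    and "\<And>u r x y. x \<in> Gm \<Longrightarrow> y \<in> Gm \<Longrightarrow> \<phi> (u @ [x, y] @ r) = - \<phi> (u @ [y, x] @ r)"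
    and "\<And>w. \<phi> (map pm w) = \<phi> w"
  shows "Phi \<phi>"
  unfolding Phi_def using assms by blast

lemma Phi_add: "Phi \<phi> \<Longrightarrow> \<phi> (u @ [x + y] @ r) = \<phi> (u @ [x] @ r) + \<phi> (u @ [y] @ r)"
  using Phi_lin[of \<phi> u 1 x 1 y r] by simp
lemma Phi_sc: "Phi \<phi> \<Longrightarrow> \<phi> (u @ [sc a x] @ r) = scV a (\<phi> (u @ [x] @ r))"
  using Phi_lin[of \<phi> u a x 0 x r] by simp
lemma Phi_0: "Phi \<phi> \<Longrightarrow> \<phi> (u @ [0] @ r) = 0"
  using Phi_sc[of \<phi> u 0 0 r] by simp
lemma Phi_neg: "Phi \<phi> \<Longrightarrow> \<phi> (u @ [- x] @ r) = - \<phi> (u @ [x] @ r)"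
  using Phi_sc[of \<phi> u "-1" x r] by simp

lemma pm_comp[simp]: "pm \<circ> pm = pm"
  by (rule ext) simp

lemma map_pm_idem[simp]: "map pm (map pm w) = map pm w"
  by (induction w) auto

lemma map_pm_Gm: "set w \<subseteq> Gm \<Longrightarrow> map pm w = w"
  by (induction w) (auto simp: pm_m)

lemma set_map_pm: "set (map pm w) \<subseteq> Gm"
  using proj_mem(1) by auto

lemma Phi_ext: "Phi F \<Longrightarrow> Phi G \<Longrightarrow> (\<And>w. set w \<subseteq> Gm \<Longrightarrow> F w = G w) \<Longrightarrow> F = G"
proof (rule ext)
  fix w assume a: "Phi F" "Phi G" "\<And>w. set w \<subseteq> Gm \<Longrightarrow> F w = G w"
  have "F w = F (map pm w)" using Phi_norm[OF a(1)] by simp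
  also have "\<dots> = G (map pm w)" using a(3) set_map_pm by blast
  also have "\<dots> = G w" using Phi_norm[OF a(2)] by simp
  finally show "F w = G w" .
qed

lemma Phi_lc: assumes "Phi \<phi>" "Phi \<psi>" shows "Phi (lcF a \<phi> b \<psi>)"
proof (rule PhiI)
  fix u r c d x y
  show "lcF a \<phi> b \<psi> (u @ [sc c x + sc d y] @ r) =
    scV c (lcF a \<phi> b \<psi> (u @ [x] @ r)) + scV d (lcF a \<phi> b \<psi> (u @ [y] @ r))"
    unfolding lcF_def Phi_lin[OF assms(1)] Phi_lin[OF assms(2)]
    by (simp add: W.scale_right_distrib mult.commute add_ac)
next
  fix u r x y assume "x \<in> Gm" "y \<in> Gm"
  thus "lcF a \<phi> b \<psi> (u @ [x, y] @ r) = - lcF a \<phi> b \<psi> (u @ [y, x] @ r)"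
    unfolding lcF_def using Phi_anti[OF assms(1), of x y u r] Phi_anti[OF assms(2), of x y u r] by simp
next
  fix w show "lcF a \<phi> b \<psi> (map pm w) = lcF a \<phi> b \<psi> w"
    unfolding lcF_def using Phi_norm[OF assms(1)] Phi_norm[OF assms(2)] by simp
qed

lemma Phi_zero: "Phi (\<lambda>_. 0)"
  by (rule PhiI) auto

lemma Phi_Y: assumes "Phi \<phi>" shows "Phi (Yop y \<phi>)"
proof (rule PhiI)
  fix u r c d x z
  show "Yop y \<phi> (u @ [sc c x + sc d z] @ r) = scV c (Yop y \<phi> (u @ [x] @ r)) + scV d (Yop y \<phi> (u @ [z] @ r))"
    unfolding Yop_def using Phi_lin[OF assms, of u c x d z "r @ [y]"] by simp
next
  fix u r x z assume "x \<in> Gm" "z \<in> Gm"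
  thus "Yop y \<phi> (u @ [x, z] @ r) = - Yop y \<phi> (u @ [z, x] @ r)"
    unfolding Yop_def using Phi_anti[OF assms, of x z u "r @ [y]"] by simp
next
  fix w
  have "\<phi> (map pm w @ [y]) = \<phi> (map pm (map pm w @ [y]))" using Phi_norm[OF assms] by metis
  also have "\<dots> = \<phi> (map pm (w @ [y]))" by simp
  also have "\<dots> = \<phi> (w @ [y])" using Phi_norm[OF assms] by metis
  finally show "Yop y \<phi> (map pm w) = Yop y \<phi> w" unfolding Yop_def .
qed

lemma Y_lc: "Yop y (lcF a \<phi> b \<psi>) = lcF a (Yop y \<phi>) b (Yop y \<psi>)"
  by (simp add: Yop_def lcF_def)

lemma Y_param: "Phi \<phi> \<Longrightarrow> Yop (sc a x + sc b y) \<phi> = lcF a (Yop x \<phi>) b (Yop y \<phi>)"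
  unfolding Yop_def lcF_def using Phi_lin[of \<phi> _ a x b y "[]"] by simp

lemma Y_pm: "Phi \<phi> \<Longrightarrow> Yop (pm y) \<phi> = Yop y \<phi>"
proof (rule ext)
  fix w assume a: "Phi \<phi>"
  have "\<phi> (w @ [pm y]) = \<phi> (map pm (w @ [pm y]))" using Phi_norm[OF a] by metis
  also have "\<dots> = \<phi> (map pm (w @ [y]))" by simp
  also have "\<dots> = \<phi> (w @ [y])" using Phi_norm[OF a] by metis
  finally show "Yop (pm y) \<phi> w = Yop y \<phi> w" unfolding Yop_def .
qed

lemma Y_zero: "Phi \<phi> \<Longrightarrow> Yop 0 \<phi> = (\<lambda>_. 0)"
  unfolding Yop_def using Phi_0[of \<phi> _ "[]"] by auto

lemma lcF_apply: "lcF a \<phi> b \<psi> w = scV a (\<phi> w) + scV b (\<psi> w)"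
  by (simp add: lcF_def)


lemma H_nil[simp]: "Hop h \<phi> [] = rho (pz h) (\<phi> [])"
  by (simp add: Hop_def)

lemma H_snoc: "Hop h \<phi> (w @ [y]) = Hop h (Yop (pm y) \<phi>) w + \<phi> (map pm w @ [br (pm y) (pz h)])"
  by (simp add: Hop_def)

lemma Hr_lc: "Hr h (lcF a \<phi> b \<psi>) r = scV a (Hr h \<phi> r) + scV b (Hr h \<psi> r)"
proof (induction r arbitrary: \<phi> \<psi>)
  case Nil thus ?case using proj_mem(2) by (simp add: lcF_apply rho_add rho_sc)
next
  case (Cons y r) show ?case
    by (simp only: Hr.simps Y_lc Cons.IH) (simp add: lcF_apply W.scale_right_distrib W.scale_right_diff_distrib add_ac)
qed

lemma H_lc: "Hop h (lcF a \<phi> b \<psi>) = lcF a (Hop h \<phi>) b (Hop h \<psi>)"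
  by (rule ext) (simp add: Hop_def Hr_lc lcF_apply)

lemma lcF_add: "lcF 1 \<phi> 1 \<psi> = (\<lambda>w. \<phi> w + \<psi> w)"
  by (simp add: lcF_def)
lemma lcF_neg: "lcF (-1) \<phi> 0 \<phi> = (\<lambda>w. - \<phi> w)"
  by (simp add: lcF_def)

lemma H_add: "Hop h (\<lambda>w. \<phi> w + \<psi> w) u = Hop h \<phi> u + Hop h \<psi> u"
  using H_lc[of h 1 \<phi> 1 \<psi>] by (simp add: lcF_def)
lemma H_neg: "Hop h (\<lambda>w. - \<phi> w) u = - Hop h \<phi> u"
  using H_lc[of h "-1" \<phi> 0 \<phi>] by (simp add: lcF_def)

lemma H_diff: "Hop h (\<lambda>w. \<phi> w - \<psi> w) u = Hop h \<phi> u - Hop h \<psi> u"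
  using H_lc[of h 1 \<phi> "-1" \<psi>] by (simp add: lcF_def)

lemma Hr_param: "Phi \<phi> \<Longrightarrow> Hr (sc a h + sc b h') \<phi> r = scV a (Hr h \<phi> r) + scV b (Hr h' \<phi> r)"
proof (induction r arbitrary: \<phi>)
  case Nil thus ?case using proj_mem(2) by (simp add: proj_lin rho_addl rho_scl sub_sc[OF sub0])
next
  case (Cons y r)
  have "br y (pz (sc a h + sc b h')) = sc a (br y (pz h)) + sc b (br y (pz h'))"
    by (simp add: proj_lin br_addr br_scr)
  thus ?case using Cons.IH[OF Phi_Y[OF Cons.prems]] Phi_lin[OF Cons.prems, of "rev r" a _ b _ "[]"]
    by (simp add: W.scale_right_distrib W.scale_right_diff_distrib add_ac)
qed

lemma H_param: "Phi \<phi> \<Longrightarrow> Hop (sc a h + sc b h') \<phi> = lcF a (Hop h \<phi>) b (Hop h' \<phi>)"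
  by (rule ext) (simp add: Hop_def Hr_param lcF_def)

lemma H_addp: "Phi \<phi> \<Longrightarrow> Hop (h + h') \<phi> u = Hop h \<phi> u + Hop h' \<phi> u"
  using H_param[of \<phi> 1 h 1 h'] by (simp add: lcF_def)
lemma H_negp: "Phi \<phi> \<Longrightarrow> Hop (- h) \<phi> u = - Hop h \<phi> u"
  using H_param[of \<phi> "-1" h 0 h] by (simp add: lcF_def)
lemma H_zerop: "Phi \<phi> \<Longrightarrow> Hop 0 \<phi> u = 0"
  using H_param[of \<phi> 0 0 0 0] by (simp add: lcF_def)

lemma Hr_pz: "Hr (pz h) \<phi> r = Hr h \<phi> r"
  by (induction r arbitrary: \<phi>) auto
lemma H_pz: "Hop (pz h) = Hop h"
  by (rule ext)+ (simp add: Hop_def Hr_pz)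

lemma H_norm: "Hop h \<phi> (map pm w) = Hop h \<phi> w"
  by (simp add: Hop_def)

lemma H_snoc': "Hop h \<phi> (u @ [c] @ r @ [t]) = Hop h (Yop (pm t) \<phi>) (u @ [c] @ r) + \<phi> (map pm u @ [pm c] @ map pm r @ [br (pm t) (pz h)])"
  using H_snoc[of h \<phi> "u @ [c] @ r" t] by simp

lemma Phi_H: assumes "Phi \<phi>" shows "Phi (Hop h \<phi>)"
proof (rule PhiI)
  fix u r a b x y
  show "Hop h \<phi> (u @ [sc a x + sc b y] @ r) = scV a (Hop h \<phi> (u @ [x] @ r)) + scV b (Hop h \<phi> (u @ [y] @ r))"
    using assms
  proof (induction r arbitrary: \<phi> rule: rev_induct)
    case Nil
    have p: "pm (sc a x + sc b y) = sc a (pm x) + sc b (pm y)" by (rule proj_lin)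
    have q: "br (sc a (pm x) + sc b (pm y)) (pz h) = sc a (br (pm x) (pz h)) + sc b (br (pm y) (pz h))"
      by (simp add: br_addl br_scl)
    have "Hop h \<phi> (u @ [sc a x + sc b y]) = Hop h (Yop (sc a (pm x) + sc b (pm y)) \<phi>) u
           + \<phi> (map pm u @ [sc a (br (pm x) (pz h)) + sc b (br (pm y) (pz h))] @ [])"
      using H_snoc[of h \<phi> u "sc a x + sc b y"] p q by simp
    also have "\<dots> = scV a (Hop h (Yop (pm x) \<phi>) u) + scV b (Hop h (Yop (pm y) \<phi>) u)
         + (scV a (\<phi> (map pm u @ [br (pm x) (pz h)])) + scV b (\<phi> (map pm u @ [br (pm y) (pz h)])))"
      using Phi_lin[OF Nil.prems, of "map pm u" a _ b _ "[]"]
      by (simp add: Y_param[OF Nil.prems] H_lc lcF_apply)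
    also have "\<dots> = scV a (Hop h \<phi> (u @ [x])) + scV b (Hop h \<phi> (u @ [y]))"
      by (simp add: H_snoc W.scale_right_distrib W.scale_right_diff_distrib add_ac)
    finally show ?case by simp
  next
    case (snoc t r)
    have IH: "Hop h (Yop (pm t) \<phi>) (u @ [sc a x + sc b y] @ r) =
       scV a (Hop h (Yop (pm t) \<phi>) (u @ [x] @ r)) + scV b (Hop h (Yop (pm t) \<phi>) (u @ [y] @ r))"
      by (rule snoc.IH[OF Phi_Y[OF snoc.prems]])
    have "\<phi> (map pm u @ [pm (sc a x + sc b y)] @ map pm r @ [br (pm t) (pz h)])
      = scV a (\<phi> (map pm u @ [pm x] @ map pm r @ [br (pm t) (pz h)])) + scV b (\<phi> (map pm u @ [pm y] @ map pm r @ [br (pm t) (pz h)]))"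
      by (simp only: proj_lin Phi_lin[OF snoc.prems])
    thus ?case using IH by (simp only: H_snoc' W.scale_right_distrib W.scale_right_diff_distrib add_ac)
  qed
next
  fix u r x y assume xy: "x \<in> Gm" "y \<in> Gm"
  show "Hop h \<phi> (u @ [x, y] @ r) = - Hop h \<phi> (u @ [y, x] @ r)"
    using assms
  proof (induction r arbitrary: \<phi> rule: rev_induct)
    case Nil
    let ?h = "pz h"
    have bx: "br x ?h \<in> Gm" "br y ?h \<in> Gm" using brm0 proj_mem(2) xy by auto
    have e: "Hop h \<phi> (u @ [x', y']) = Hop h (Yop x' (Yop y' \<phi>)) u + \<phi> (map pm u @ [br x' ?h, y'])
        + \<phi> (map pm u @ [x', br y' ?h])" if "x' \<in> Gm" "y' \<in> Gm" for x' y'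
    proof -
      have "Hop h \<phi> (u @ [x', y']) = Hop h \<phi> ((u @ [x']) @ [y'])" by simp
      also have "\<dots> = Hop h (Yop y' \<phi>) (u @ [x']) + \<phi> (map pm u @ [x', br y' ?h])"
        by (simp only: H_snoc) (simp add: that pm_m)
      also have "\<dots> = Hop h (Yop x' (Yop y' \<phi>)) u + \<phi> (map pm u @ [br x' ?h, y'])
            + \<phi> (map pm u @ [x', br y' ?h])"
        by (simp add: H_snoc Yop_def that pm_m)
      finally show ?thesis .
    qed
    have yy: "Yop x (Yop y \<phi>) = (\<lambda>w. - Yop y (Yop x \<phi>) w)"
      by (rule ext) (simp add: Yop_def Phi_anti[OF Nil.prems xy, of _ "[]", simplified])
    have A: "Hop h (Yop x (Yop y \<phi>)) u = - Hop h (Yop y (Yop x \<phi>)) u"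
      by (simp only: yy H_neg)
    have P: "\<phi> (map pm u @ [br x ?h, y]) = - \<phi> (map pm u @ [y, br x ?h])"
      using Phi_anti[OF Nil.prems bx(1) xy(2), of "map pm u" "[]"] by simp
    have Q: "\<phi> (map pm u @ [x, br y ?h]) = - \<phi> (map pm u @ [br y ?h, x])"
      using Phi_anti[OF Nil.prems xy(1) bx(2), of "map pm u" "[]"] by simp
    show ?case using e[OF xy] e[OF xy(2,1)] A P Q by simp
  next
    case (snoc t r)
    have IH: "Hop h (Yop (pm t) \<phi>) (u @ [x, y] @ r) = - Hop h (Yop (pm t) \<phi>) (u @ [y, x] @ r)"
      by (rule snoc.IH[OF Phi_Y[OF snoc.prems]])
    have s2: "Hop h \<phi> (u @ [x', y'] @ r @ [t]) = Hop h (Yop (pm t) \<phi>) (u @ [x', y'] @ r)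
        + \<phi> (map pm u @ [x', y'] @ map pm r @ [br (pm t) (pz h)])" if "x' \<in> Gm" "y' \<in> Gm" for x' y'
      using H_snoc[of h \<phi> "u @ [x', y'] @ r" t] that by (simp add: pm_m)
    have P: "\<phi> (map pm u @ [x, y] @ map pm r @ [br (pm t) (pz h)]) = - \<phi> (map pm u @ [y, x] @ map pm r @ [br (pm t) (pz h)])"
      by (rule Phi_anti[OF snoc.prems xy])
    show ?case using s2[OF xy] s2[OF xy(2,1)] IH P by simp
  qed
next
  fix w show "Hop h \<phi> (map pm w) = Hop h \<phi> w" by (rule H_norm)
qed

lemma Z_nil[simp]: "Zop z \<phi> [] = 0"
  by (simp add: Zop_def)

lemma Z_snoc: "Zop z \<phi> (w @ [y]) = - Zop z (Yop (pm y) \<phi>) w + Hop (br (pm y) (pp z)) \<phi> w"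
  by (simp add: Zop_def) (metis H_norm rev_rev_ident)

lemma Zr_lc: "Zr z (lcF a \<phi> b \<psi>) r = scV a (Zr z \<phi> r) + scV b (Zr z \<psi> r)"
proof (induction r arbitrary: \<phi> \<psi>)
  case Nil thus ?case by simp
next
  case (Cons y r) show ?case
    by (simp only: Zr.simps Y_lc Cons.IH H_lc) (simp add: lcF_apply W.scale_right_distrib W.scale_right_diff_distrib add_ac)
qed

lemma Z_lc: "Zop z (lcF a \<phi> b \<psi>) = lcF a (Zop z \<phi>) b (Zop z \<psi>)"
  by (rule ext) (simp add: Zop_def Zr_lc lcF_apply)

lemma Z_add: "Zop z (\<lambda>w. \<phi> w + \<psi> w) u = Zop z \<phi> u + Zop z \<psi> u"
  using Z_lc[of z 1 \<phi> 1 \<psi>] by (simp add: lcF_def)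
lemma Z_neg: "Zop z (\<lambda>w. - \<phi> w) u = - Zop z \<phi> u"
  using Z_lc[of z "-1" \<phi> 0 \<phi>] by (simp add: lcF_def)

lemma Z_diff: "Zop z (\<lambda>w. \<phi> w - \<psi> w) u = Zop z \<phi> u - Zop z \<psi> u"
  using Z_lc[of z 1 \<phi> "-1" \<psi>] by (simp add: lcF_def)

lemma Zr_param: "Phi \<phi> \<Longrightarrow> Zr (sc a z + sc b z') \<phi> r = scV a (Zr z \<phi> r) + scV b (Zr z' \<phi> r)"
proof (induction r arbitrary: \<phi>)
  case Nil thus ?case by simp
next
  case (Cons y r)
  have "br y (pp (sc a z + sc b z')) = sc a (br y (pp z)) + sc b (br y (pp z'))"
    by (simp add: proj_lin br_addr br_scr)
  thus ?case using Cons.IH[OF Phi_Y[OF Cons.prems]] H_param[OF Cons.prems]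
    by (simp add: lcF_apply W.scale_right_distrib W.scale_right_diff_distrib add_ac)
qed

lemma Z_param: "Phi \<phi> \<Longrightarrow> Zop (sc a z + sc b z') \<phi> = lcF a (Zop z \<phi>) b (Zop z' \<phi>)"
  by (rule ext) (simp add: Zop_def Zr_param lcF_apply)

lemma Z_addp: "Phi \<phi> \<Longrightarrow> Zop (z + z') \<phi> u = Zop z \<phi> u + Zop z' \<phi> u"
  using Z_param[of \<phi> 1 z 1 z'] by (simp add: lcF_def)
lemma Z_negp: "Phi \<phi> \<Longrightarrow> Zop (- z) \<phi> u = - Zop z \<phi> u"
  using Z_param[of \<phi> "-1" z 0 z] by (simp add: lcF_def)
lemma Z_zerop: "Phi \<phi> \<Longrightarrow> Zop 0 \<phi> u = 0"
  using Z_param[of \<phi> 0 0 0 0] by (simp add: lcF_def)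

lemma Zr_pp: "Zr (pp z) \<phi> r = Zr z \<phi> r"
  by (induction r arbitrary: \<phi>) auto
lemma Z_pp: "Zop (pp z) = Zop z"
  by (rule ext)+ (simp add: Zop_def Zr_pp)

lemma Z_norm: "Zop z \<phi> (map pm w) = Zop z \<phi> w"
  by (simp add: Zop_def)

lemma Z_snoc': "Zop z \<phi> (u @ [c] @ r @ [t]) = - Zop z (Yop (pm t) \<phi>) (u @ [c] @ r) + Hop (br (pm t) (pp z)) \<phi> (u @ [c] @ r)"
  using Z_snoc[of z \<phi> "u @ [c] @ r" t] by simp

lemma Phi_Z: assumes "Phi \<phi>" shows "Phi (Zop z \<phi>)"
proof (rule PhiI)
  fix u r a b x y
  show "Zop z \<phi> (u @ [sc a x + sc b y] @ r) = scV a (Zop z \<phi> (u @ [x] @ r)) + scV b (Zop z \<phi> (u @ [y] @ r))"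
    using assms
  proof (induction r arbitrary: \<phi> rule: rev_induct)
    case Nil
    have p: "pm (sc a x + sc b y) = sc a (pm x) + sc b (pm y)" by (rule proj_lin)
    have q: "br (sc a (pm x) + sc b (pm y)) (pp z) = sc a (br (pm x) (pp z)) + sc b (br (pm y) (pp z))"
      by (simp add: br_addl br_scl)
    have "Zop z \<phi> (u @ [sc a x + sc b y]) = - Zop z (Yop (sc a (pm x) + sc b (pm y)) \<phi>) u
           + Hop (sc a (br (pm x) (pp z)) + sc b (br (pm y) (pp z))) \<phi> u"
      using Z_snoc[of z \<phi> u "sc a x + sc b y"] p q by simp
    also have "\<dots> = - (scV a (Zop z (Yop (pm x) \<phi>) u) + scV b (Zop z (Yop (pm y) \<phi>) u))
         + (scV a (Hop (br (pm x) (pp z)) \<phi> u) + scV b (Hop (br (pm y) (pp z)) \<phi> u))"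
      by (simp add: Y_param[OF Nil.prems] Z_lc H_param[OF Nil.prems] lcF_apply)
    also have "\<dots> = scV a (Zop z \<phi> (u @ [x])) + scV b (Zop z \<phi> (u @ [y]))"
      by (simp add: Z_snoc W.scale_right_distrib W.scale_right_diff_distrib add_ac)
    finally show ?case by simp
  next
    case (snoc t r)
    have IH: "Zop z (Yop (pm t) \<phi>) (u @ [sc a x + sc b y] @ r) =
       scV a (Zop z (Yop (pm t) \<phi>) (u @ [x] @ r)) + scV b (Zop z (Yop (pm t) \<phi>) (u @ [y] @ r))"
      by (rule snoc.IH[OF Phi_Y[OF snoc.prems]])
    have H: "Hop (br (pm t) (pp z)) \<phi> (u @ [sc a x + sc b y] @ r) =
       scV a (Hop (br (pm t) (pp z)) \<phi> (u @ [x] @ r)) + scV b (Hop (br (pm t) (pp z)) \<phi> (u @ [y] @ r))"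
      by (rule Phi_lin[OF Phi_H[OF snoc.prems]])
    show ?case using IH H by (simp only: Z_snoc' W.scale_right_distrib W.scale_minus_right add_ac minus_add)
  qed
next
  fix u r x y assume xy: "x \<in> Gm" "y \<in> Gm"
  show "Zop z \<phi> (u @ [x, y] @ r) = - Zop z \<phi> (u @ [y, x] @ r)"
    using assms
  proof (induction r arbitrary: \<phi> rule: rev_induct)
    case Nil
    let ?z = "pp z"
    have e: "Zop z \<phi> (u @ [x', y']) = Zop z (Yop x' (Yop y' \<phi>)) u - Hop (br x' ?z) (Yop y' \<phi>) u
        + Hop (br y' ?z) (Yop x' \<phi>) u + \<phi> (map pm u @ [br x' (br y' ?z)])" if "x' \<in> Gm" "y' \<in> Gm" for x' y'
    proof -
      have bz: "pz (br y' ?z) = br y' ?z" using brmp[OF that(2) proj_mem(3)] pz_z by blast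
      have "Zop z \<phi> (u @ [x', y']) = Zop z \<phi> ((u @ [x']) @ [y'])" by simp
      also have "\<dots> = - Zop z (Yop y' \<phi>) (u @ [x']) + Hop (br y' ?z) \<phi> (u @ [x'])"
        by (simp only: Z_snoc) (simp add: that pm_m)
      also have "\<dots> = Zop z (Yop x' (Yop y' \<phi>)) u - Hop (br x' ?z) (Yop y' \<phi>) u
        + Hop (br y' ?z) (Yop x' \<phi>) u + \<phi> (map pm u @ [br x' (br y' ?z)])"
        by (simp add: Z_snoc H_snoc Yop_def that pm_m bz)
      finally show ?thesis .
    qed
    have yy: "Yop x (Yop y \<phi>) = (\<lambda>w. - Yop y (Yop x \<phi>) w)"
      by (rule ext) (simp add: Yop_def Phi_anti[OF Nil.prems xy, of _ "[]", simplified])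
    have A: "Zop z (Yop x (Yop y \<phi>)) u = - Zop z (Yop y (Yop x \<phi>)) u"
      by (simp only: yy Z_neg)
    have j: "br x (br y ?z) = - br y (br x ?z)"
      using jac_odd[OF m_odd[OF xy(1)] m_odd[OF xy(2)] p_homog[OF proj_mem(3)]] brmm[OF xy] by simp
    have P: "\<phi> (map pm u @ [br x (br y ?z)]) = - \<phi> (map pm u @ [br y (br x ?z)])"
      using Phi_neg[OF Nil.prems, of "map pm u" _ "[]"] j by simp
    show ?case using e[OF xy] e[OF xy(2,1)] A P by simp
  next
    case (snoc t r)
    have IH: "Zop z (Yop (pm t) \<phi>) (u @ [x, y] @ r) = - Zop z (Yop (pm t) \<phi>) (u @ [y, x] @ r)"
      by (rule snoc.IH[OF Phi_Y[OF snoc.prems]])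
    have H: "Hop (br (pm t) (pp z)) \<phi> (u @ [x, y] @ r) = - Hop (br (pm t) (pp z)) \<phi> (u @ [y, x] @ r)"
      by (rule Phi_anti[OF Phi_H[OF snoc.prems] xy])
    have s2: "Zop z \<phi> (u @ [x', y'] @ r @ [t]) = - Zop z (Yop (pm t) \<phi>) (u @ [x', y'] @ r)
        + Hop (br (pm t) (pp z)) \<phi> (u @ [x', y'] @ r)" for x' y'
      using Z_snoc[of z \<phi> "u @ [x', y'] @ r" t] by simp
    show ?case using s2[of x y] s2[of y x] IH H by simp
  qed
next
  fix w show "Zop z \<phi> (map pm w) = Zop z \<phi> w" by (rule Z_norm)
qed

lemma Phi_plus: "Phi A \<Longrightarrow> Phi B \<Longrightarrow> Phi (\<lambda>w. A w + B w)"
  using Phi_lc[of A B 1 1] by (simp add: lcF_add)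
lemma Phi_uminus: "Phi A \<Longrightarrow> Phi (\<lambda>w. - A w)"
  using Phi_lc[of A A "-1" 0] by (simp add: lcF_neg)

lemma YH: "Phi \<phi> \<Longrightarrow> Yop y (Hop h \<phi>) = (\<lambda>w. Hop h (Yop (pm y) \<phi>) w + Yop (br (pm y) (pz h)) \<phi> w)"
proof (rule ext)
  fix w assume a: "Phi \<phi>"
  have "\<phi> (map pm w @ [br (pm y) (pz h)]) = Yop (br (pm y) (pz h)) \<phi> w"
    using Phi_norm[OF Phi_Y[OF a]] by (simp add: Yop_def)
  thus "Yop y (Hop h \<phi>) w = Hop h (Yop (pm y) \<phi>) w + Yop (br (pm y) (pz h)) \<phi> w"
    by (simp add: Yop_def H_snoc)
qed

lemma YZ: "Yop y (Zop z \<phi>) = (\<lambda>w. - Zop z (Yop (pm y) \<phi>) w + Hop (br (pm y) (pp z)) \<phi> w)"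
  by (rule ext) (simp add: Yop_def Z_snoc)

lemma HH:
  assumes h: "h \<in> G0" "h' \<in> G0" and ph: "Phi \<phi>"
  shows "Hop h (Hop h' \<phi>) = (\<lambda>w. Hop h' (Hop h \<phi>) w + Hop (br h h') \<phi> w)"
proof (rule Phi_ext)
  show "Phi (Hop h (Hop h' \<phi>))" by (rule Phi_H[OF Phi_H[OF ph]])
  show "Phi (\<lambda>w. Hop h' (Hop h \<phi>) w + Hop (br h h') \<phi> w)" by (rule Phi_plus[OF Phi_H[OF Phi_H[OF ph]] Phi_H[OF ph]])
  have hh: "br h h' \<in> G0" using br00 h by blast
  have pzh: "pz h = h" "pz h' = h'" "pz (br h h') = br h h'" using pz_z h hh by auto
  fix w assume "set w \<subseteq> Gm"
  thus "Hop h (Hop h' \<phi>) w = Hop h' (Hop h \<phi>) w + Hop (br h h') \<phi> w"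
    using ph
  proof (induction w arbitrary: \<phi> rule: rev_induct)
    case Nil thus ?case by (simp add: pzh rho_br h)
  next
    case (snoc y w)
    have ym: "y \<in> Gm" and wm: "set w \<subseteq> Gm" using snoc.prems by auto
    note p = snoc.prems(2)
    have pmy: "pm y = y" using pm_m ym by blast
    have mw: "map pm w = w" using map_pm_Gm wm by blast
    have b1: "br y h \<in> Gm" "br y h' \<in> Gm" using brm0 h ym by auto
    have e1: "Hop h (Hop h' \<phi>) (w @ [y]) = Hop h (Hop h' (Yop y \<phi>)) w + Hop h (Yop (br y h') \<phi>) w
          + Hop h' (Yop (br y h) \<phi>) w + \<phi> (w @ [br (br y h) h'])"
      if "h \<in> G0" "h' \<in> G0" "br y h \<in> Gm" "br y h' \<in> Gm" for h h'
    proof -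
      have "Hop h (Hop h' \<phi>) (w @ [y]) = Hop h (Yop y (Hop h' \<phi>)) w + Hop h' \<phi> (w @ [br y h])"
        by (simp add: H_snoc pmy mw pz_z that)
      also have "\<dots> = Hop h (Hop h' (Yop y \<phi>)) w + Hop h (Yop (br y h') \<phi>) w
          + Hop h' (Yop (br y h) \<phi>) w + \<phi> (w @ [br (br y h) h'])"
        by (simp add: YH[OF p] H_add H_snoc pmy mw pz_z pm_m that)
      finally show ?thesis .
    qed
    have e3: "Hop (br h h') \<phi> (w @ [y]) = Hop (br h h') (Yop y \<phi>) w + \<phi> (w @ [br y (br h h')])"
      by (simp add: H_snoc pmy mw pzh)
    have IH: "Hop h (Hop h' (Yop y \<phi>)) w = Hop h' (Hop h (Yop y \<phi>)) w + Hop (br h h') (Yop y \<phi>) w"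
      using snoc.IH[OF wm Phi_Y[OF p]] .
    have j: "br (br y h) h' = br (br y h') h + br y (br h h')"
    proof -
      have "br y (br h h') = br (br y h) h' + br h (br y h')"
        using jac_even2[OF h(1) m_homog[OF ym] z_homog[OF h(2)]] .
      moreover have "br h (br y h') = - br (br y h') h" using anti_even[OF h(1) m_homog[OF b1(2)]] .
      ultimately show ?thesis by (simp add: algebra_simps)
    qed
    have J: "\<phi> (w @ [br (br y h) h']) = \<phi> (w @ [br (br y h') h]) + \<phi> (w @ [br y (br h h')])"
      using Phi_add[OF p, of w "br (br y h') h" "br y (br h h')" "[]"] j by simp
    show ?case using e1[OF h b1] e1[OF h(2,1) b1(2,1)] e3 IH J by (simp add: add_ac)
  qed
qed

lemma HZ:
  assumes h: "h \<in> G0" and z: "z \<in> Gp" and ph: "Phi \<phi>"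
  shows "Hop h (Zop z \<phi>) = (\<lambda>w. Zop z (Hop h \<phi>) w + Zop (br h z) \<phi> w)"
proof (rule Phi_ext)
  show "Phi (Hop h (Zop z \<phi>))" by (rule Phi_H[OF Phi_Z[OF ph]])
  show "Phi (\<lambda>w. Zop z (Hop h \<phi>) w + Zop (br h z) \<phi> w)" by (rule Phi_plus[OF Phi_Z[OF Phi_H[OF ph]] Phi_Z[OF ph]])
  have hz: "br h z \<in> Gp" using br0p h z by blast
  have pp: "pp z = z" "pp (br h z) = br h z" using pp_p z hz by auto
  have pzh: "pz h = h" using pz_z h by blast
  fix w assume "set w \<subseteq> Gm"
  thus "Hop h (Zop z \<phi>) w = Zop z (Hop h \<phi>) w + Zop (br h z) \<phi> w"
    using ph
  proof (induction w arbitrary: \<phi> rule: rev_induct)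
    case Nil thus ?case by (simp add: pzh rho_zero h)
  next
    case (snoc y w)
    have ym: "y \<in> Gm" and wm: "set w \<subseteq> Gm" using snoc.prems by auto
    note p = snoc.prems(2)
    have pmy: "pm y = y" using pm_m ym by blast
    have mw: "map pm w = w" using map_pm_Gm wm by blast
    have byh: "br y h \<in> Gm" using brm0 h ym by auto
    have byz: "br y z \<in> G0" using brmp ym z by auto
    have ppb: "pp (br y h) = 0" "pm (br y h) = br y h" using pp_m pm_m byh by auto
    have e1: "Hop h (Zop z \<phi>) (w @ [y]) = - Hop h (Zop z (Yop y \<phi>)) w + Hop h (Hop (br y z) \<phi>) w
        - Zop z (Yop (br y h) \<phi>) w + Hop (br (br y h) z) \<phi> w"
    proof -
      have "Hop h (Zop z \<phi>) (w @ [y]) = Hop h (Yop y (Zop z \<phi>)) w + Zop z \<phi> (w @ [br y h])"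
        by (simp add: H_snoc pmy mw pzh)
      also have "\<dots> = - Hop h (Zop z (Yop y \<phi>)) w + Hop h (Hop (br y z) \<phi>) w
        - Zop z (Yop (br y h) \<phi>) w + Hop (br (br y h) z) \<phi> w"
        by (simp add: YZ H_add H_neg H_diff Z_snoc pmy pp ppb)
      finally show ?thesis .
    qed
    have e2: "Zop z (Hop h \<phi>) (w @ [y]) = - Zop z (Hop h (Yop y \<phi>)) w - Zop z (Yop (br y h) \<phi>) w
        + Hop (br y z) (Hop h \<phi>) w"
      by (simp add: Z_snoc YH[OF p] Z_add pmy pp pzh)
    have e3: "Zop (br h z) \<phi> (w @ [y]) = - Zop (br h z) (Yop y \<phi>) w + Hop (br y (br h z)) \<phi> w"
      by (simp add: Z_snoc pmy pp)
    have IH: "Hop h (Zop z (Yop y \<phi>)) w = Zop z (Hop h (Yop y \<phi>)) w + Zop (br h z) (Yop y \<phi>) w"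
      using snoc.IH[OF wm Phi_Y[OF p]] .
    have hh: "Hop h (Hop (br y z) \<phi>) w = Hop (br y z) (Hop h \<phi>) w + Hop (br h (br y z)) \<phi> w"
      using HH[OF h byz p] by metis
    have j: "br h (br y z) + br (br y h) z = br y (br h z)"
    proof -
      have "br h (br y z) = br (br h y) z + br y (br h z)"
        using jac_even[OF h m_homog[OF ym] p_homog[OF z]] .
      moreover have "br h y = - br y h" using anti_even[OF h m_homog[OF ym]] .
      ultimately show ?thesis by (simp add: br_negl)
    qed
    have J: "Hop (br h (br y z)) \<phi> w + Hop (br (br y h) z) \<phi> w = Hop (br y (br h z)) \<phi> w"
      using H_addp[OF p, of "br h (br y z)" "br (br y h) z" w] j by simp
    show ?case unfolding e1 e2 e3 IH hh J[symmetric] by (simp add: algebra_simps)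
  qed
qed

lemma ZZ:
  assumes z: "z \<in> Gp" "z' \<in> Gp" and ph: "Phi \<phi>"
  shows "Zop z (Zop z' \<phi>) = (\<lambda>w. - Zop z' (Zop z \<phi>) w)"
proof (rule Phi_ext)
  show "Phi (Zop z (Zop z' \<phi>))" by (rule Phi_Z[OF Phi_Z[OF ph]])
  show "Phi (\<lambda>w. - Zop z' (Zop z \<phi>) w)" by (rule Phi_uminus[OF Phi_Z[OF Phi_Z[OF ph]]])
  have pp: "pp z = z" "pp z' = z'" using pp_p z by auto
  fix w assume "set w \<subseteq> Gm"
  thus "Zop z (Zop z' \<phi>) w = - Zop z' (Zop z \<phi>) w"
    using ph
  proof (induction w arbitrary: \<phi> rule: rev_induct)
    case Nil thus ?case by simp
  next
    case (snoc y w)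
    have ym: "y \<in> Gm" and wm: "set w \<subseteq> Gm" using snoc.prems by auto
    note p = snoc.prems(2)
    have pmy: "pm y = y" using pm_m ym by blast
    have e: "Zop z (Zop z' \<phi>) (w @ [y]) = Zop z (Zop z' (Yop y \<phi>)) w - Zop z (Hop (br y z') \<phi>) w
         + Hop (br y z) (Zop z' \<phi>) w" if "pp z = z" "pp z' = z'" for z z'
      by (simp add: Z_snoc YZ Z_add Z_neg Z_diff pmy that)
    have IH: "Zop z (Zop z' (Yop y \<phi>)) w = - Zop z' (Zop z (Yop y \<phi>)) w"
      using snoc.IH[OF wm Phi_Y[OF p]] .
    have b: "br y z \<in> G0" "br y z' \<in> G0" using brmp ym z by auto
    have h1: "Hop (br y z) (Zop z' \<phi>) w = Zop z' (Hop (br y z) \<phi>) w + Zop (br (br y z) z') \<phi> w"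
      using HZ[OF b(1) z(2) p] by metis
    have h2: "Hop (br y z') (Zop z \<phi>) w = Zop z (Hop (br y z') \<phi>) w + Zop (br (br y z') z) \<phi> w"
      using HZ[OF b(2) z(1) p] by metis
    have j: "br (br y z) z' = - br (br y z') z"
    proof -
      have "br y (br z z') = br (br y z) z' - br z (br y z')"
        using jac_odd[OF m_odd[OF ym] p_odd[OF z(1)] p_homog[OF z(2)]] .
      moreover have "br z z' = 0" using brpp z by blast
      moreover have "br z (br y z') = - br (br y z') z" using anti_even2[OF b(2) p_homog[OF z(1)]] .
      ultimately show ?thesis by (simp add: eq_neg_iff_add_eq_0)
    qed
    have J: "Zop (br (br y z) z') \<phi> w = - Zop (br (br y z') z) \<phi> w"
      using Z_negp[OF p] j by simp
    show ?case unfolding e[OF pp] e[OF pp(2,1)] IH h1 h2 J by (simp add: algebra_simps)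
  qed
qed

definition pi :: "'g \<Rightarrow> ('g list \<Rightarrow> 'v) \<Rightarrow> 'g list \<Rightarrow> 'v" where
  "pi x \<phi> = (\<lambda>w. Yop (pm x) \<phi> w + Hop x \<phi> w + Zop x \<phi> w)"

lemma Phi_pi: "Phi \<phi> \<Longrightarrow> Phi (pi x \<phi>)"
  unfolding pi_def
  by (rule Phi_plus[OF Phi_plus[OF Phi_Y Phi_H] Phi_Z, simplified])

lemma pi_lc: "pi x (lcF a \<phi> b \<psi>) = lcF a (pi x \<phi>) b (pi x \<psi>)"
  by (rule ext) (simp add: pi_def Y_lc H_lc Z_lc lcF_apply W.scale_right_distrib add_ac)

lemma pi_param: "Phi \<phi> \<Longrightarrow> pi (sc a x + sc b y) \<phi> = lcF a (pi x \<phi>) b (pi y \<phi>)"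
  by (rule ext) (simp add: pi_def proj_lin Y_param H_param Z_param lcF_apply W.scale_right_distrib add_ac)

lemma Y_0f: "Phi \<phi> \<Longrightarrow> Yop 0 \<phi> w = 0"
  using Y_zero by metis

lemma pi_G0: "x \<in> G0 \<Longrightarrow> Phi \<phi> \<Longrightarrow> pi x \<phi> = Hop x \<phi>"
proof (rule ext)
  fix w assume a: "x \<in> G0" "Phi \<phi>"
  have "Zop x \<phi> w = 0" using Z_pp[of x] pp_z[OF a(1)] Z_zerop[OF a(2)] by metis
  thus "pi x \<phi> w = Hop x \<phi> w" using pm_z[OF a(1)] Y_0f[OF a(2)] by (simp add: pi_def)
qed

lemma pi_odd: "pz x = 0 \<Longrightarrow> Phi \<phi> \<Longrightarrow> pi x \<phi> = (\<lambda>w. Yop (pm x) \<phi> w + Zop (pp x) \<phi> w)"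
proof (rule ext)
  fix w assume a: "pz x = 0" "Phi \<phi>"
  have "Hop x \<phi> w = 0" using H_pz[of x] a H_zerop by metis
  thus "pi x \<phi> w = Yop (pm x) \<phi> w + Zop (pp x) \<phi> w" by (simp add: pi_def Z_pp)
qed

lemma pi_Gm: "x \<in> Gm \<Longrightarrow> Phi \<phi> \<Longrightarrow> pi x \<phi> = Yop x \<phi>"
proof (rule ext)
  fix w assume a: "x \<in> Gm" "Phi \<phi>"
  have "Zop x \<phi> w = 0" using Z_pp[of x] pp_m[OF a(1)] Z_zerop[OF a(2)] by metis
  moreover have "Hop x \<phi> w = 0" using H_pz[of x] pz_m[OF a(1)] H_zerop[OF a(2)] by metis
  ultimately show "pi x \<phi> w = Yop x \<phi> w" using pm_m[OF a(1)] by (simp add: pi_def)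
qed

lemma Y_add: "Yop c (\<lambda>w. A w + B w) u = Yop c A u + Yop c B u"
  by (simp add: Yop_def)

lemma Y_negp: "Phi \<phi> \<Longrightarrow> Yop (- c) \<phi> w = - Yop c \<phi> w"
  using Phi_neg[of \<phi> w c "[]"] by (simp add: Yop_def)

lemma YY: "x \<in> Gm \<Longrightarrow> y \<in> Gm \<Longrightarrow> Phi \<phi> \<Longrightarrow> Yop x (Yop y \<phi>) w = - Yop y (Yop x \<phi>) w"
  using Phi_anti[of \<phi> x y w "[]"] by (simp add: Yop_def)

lemma pi_rel:
  assumes hx: "hom x" and hy: "hom y" and p: "Phi \<phi>"
  shows "pi x (pi y \<phi>) = lcF (ssign G0 x y) (pi y (pi x \<phi>)) 1 (pi (br x y) \<phi>)"
proof (cases "x \<in> G0")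
  case True note x0 = True
  show ?thesis
  proof (cases "y \<in> G0")
    case True
    have "pi x (pi y \<phi>) = Hop x (Hop y \<phi>)" using pi_G0 x0 True Phi_H p by simp
    also have "\<dots> = (\<lambda>w. Hop y (Hop x \<phi>) w + Hop (br x y) \<phi> w)" by (rule HH[OF x0 True p])
    also have "\<dots> = lcF (ssign G0 x y) (pi y (pi x \<phi>)) 1 (pi (br x y) \<phi>)"
      using pi_G0 x0 True Phi_H p br00[OF x0 True] by (simp add: lcF_def ssign_def)
    finally show ?thesis .
  next
    case False
    have pzy: "pz y = 0" using hy False by (simp add: homog_iff)
    let ?m = "pm y" and ?p = "pp y"
    have m: "?m \<in> Gm" and pp: "?p \<in> Gp" using proj_mem by auto
    have ys: "y = ?m + ?p" using odd_sum[OF pzy] .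
    have b1: "br x ?m \<in> Gm" "br x ?p \<in> Gp" using br0m br0p x0 m pp by auto
    have bxy: "br x y = br x ?m + br x ?p" using ys br_addr by metis
    have pzb: "pz (br x y) = 0" using bxy b1 by (simp add: proj_add pz_m pz_p)
    have pmb: "pm (br x y) = br x ?m" and ppb: "pp (br x y) = br x ?p"
      using bxy b1 by (simp_all add: proj_add pm_m pm_p pp_m pp_p)
    have pzx: "pz x = x" using pz_z x0 by blast
    have an: "br ?m x = - br x ?m" using anti_even2[OF x0 m_homog[OF m]] .
    show ?thesis
    proof (rule ext)
      fix w
      have L: "pi x (pi y \<phi>) w = Hop x (Yop ?m \<phi>) w + Zop ?p (Hop x \<phi>) w + Zop (br x ?p) \<phi> w"
        using pi_G0[OF x0 Phi_pi[OF p, of y]] pi_odd[OF pzy p] HZ[OF x0 pp p]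
        by (simp add: H_add pp_p[OF pp])
      have R1: "pi y (pi x \<phi>) w = Hop x (Yop ?m \<phi>) w - Yop (br x ?m) \<phi> w + Zop ?p (Hop x \<phi>) w"
        using pi_G0[OF x0 p] pi_odd[OF pzy Phi_H[OF p]] YH[OF p, of ?m x] an Y_negp[OF p]
        by (simp add: pm_m[OF m] pzx)
      have R2: "pi (br x y) \<phi> w = Yop (br x ?m) \<phi> w + Zop (br x ?p) \<phi> w"
        using pi_odd[OF pzb p] pmb ppb by simp
      have s: "ssign G0 x y = 1" using x0 by (simp add: ssign_def)
      show "pi x (pi y \<phi>) w = lcF (ssign G0 x y) (pi y (pi x \<phi>)) 1 (pi (br x y) \<phi>) w"
        unfolding lcF_apply s L R1 R2 by (simp add: algebra_simps)
    qed
  qed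
next
  case False note xn = False
  have pzx: "pz x = 0" using hx False by (simp add: homog_iff)
  let ?xm = "pm x" and ?xp = "pp x"
  have xm: "?xm \<in> Gm" and xp: "?xp \<in> Gp" using proj_mem by auto
  have xs: "x = ?xm + ?xp" using odd_sum[OF pzx] .
  show ?thesis
  proof (cases "y \<in> G0")
    case True note y0 = True
    have b1: "br ?xm y \<in> Gm" "br ?xp y \<in> Gp" using brm0 brp0 y0 xm xp by auto
    have bxy: "br x y = br ?xm y + br ?xp y" using xs br_addl by metis
    have pzb: "pz (br x y) = 0" using bxy b1 by (simp add: proj_add pz_m pz_p)
    have pmb: "pm (br x y) = br ?xm y" and ppb: "pp (br x y) = br ?xp y"
      using bxy b1 by (simp_all add: proj_add pm_m pm_p pp_m pp_p)
    have pzy: "pz y = y" using pz_z y0 by blast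
    have an: "br ?xp y = - br y ?xp" using anti_even2[OF y0 p_homog[OF xp]] .
    show ?thesis
    proof (rule ext)
      fix w
      have L: "pi x (pi y \<phi>) w = Hop y (Yop ?xm \<phi>) w + Yop (br ?xm y) \<phi> w + Zop ?xp (Hop y \<phi>) w"
        using pi_G0[OF y0 p] pi_odd[OF pzx Phi_H[OF p]] YH[OF p, of ?xm y]
        by (simp add: pm_m[OF xm] pzy)
      have R1: "pi y (pi x \<phi>) w = Hop y (Yop ?xm \<phi>) w + Zop ?xp (Hop y \<phi>) w + Zop (br y ?xp) \<phi> w"
        using pi_G0[OF y0 Phi_pi[OF p, of x]] pi_odd[OF pzx p] HZ[OF y0 xp p]
        by (simp add: H_add)
      have R2: "pi (br x y) \<phi> w = Yop (br ?xm y) \<phi> w - Zop (br y ?xp) \<phi> w"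
        using pi_odd[OF pzb p] pmb ppb an Z_negp[OF p] by simp
      have s: "ssign G0 x y = 1" using y0 by (simp add: ssign_def)
      show "pi x (pi y \<phi>) w = lcF (ssign G0 x y) (pi y (pi x \<phi>)) 1 (pi (br x y) \<phi>) w"
        unfolding lcF_apply s L R1 R2 by (simp add: algebra_simps)
    qed
  next
    case False
    have pzy: "pz y = 0" using hy False by (simp add: homog_iff)
    let ?ym = "pm y" and ?yp = "pp y"
    have ym: "?ym \<in> Gm" and yp: "?yp \<in> Gp" using proj_mem by auto
    have ys: "y = ?ym + ?yp" using odd_sum[OF pzy] .
    have bxy0: "br (?xm + ?xp) (?ym + ?yp) = br x y" using xs[symmetric] ys[symmetric] by simp
    have bxy: "br x y = br ?xm ?yp + br ?xp ?ym"
      unfolding bxy0[symmetric] br_addl br_addr brmm[OF xm ym] brpp[OF xp yp] by simp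
    have b0: "br ?xm ?yp \<in> G0" "br ?xp ?ym \<in> G0" using brmp brpm xm xp ym yp by auto
    have bx0: "br x y \<in> G0" using bxy b0 sub_add[OF sub0] by metis
    have an: "br ?ym ?xp = br ?xp ?ym" using anti_odd[OF m_odd[OF ym] p_odd[OF xp]] .
    show ?thesis
    proof (rule ext)
      fix w
      have Lx: "pi x (pi y \<phi>) w = Yop ?xm (Yop ?ym \<phi>) w + (- Zop ?yp (Yop ?xm \<phi>) w + Hop (br ?xm ?yp) \<phi> w)
          + Zop ?xp (Yop ?ym \<phi>) w + Zop ?xp (Zop ?yp \<phi>) w"
      proof -
        have a1: "pi y \<phi> = (\<lambda>w. Yop ?ym \<phi> w + Zop ?yp \<phi> w)" by (rule pi_odd[OF pzy p])
        have a2: "pi x (pi y \<phi>) w = Yop ?xm (pi y \<phi>) w + Zop ?xp (pi y \<phi>) w"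
          using pi_odd[OF pzx Phi_pi[OF p, of y]] by simp
        have a3: "Yop ?xm (Zop ?yp \<phi>) w = - Zop ?yp (Yop ?xm \<phi>) w + Hop (br ?xm ?yp) \<phi> w"
          using fun_cong[OF YZ[of ?xm ?yp \<phi>], of w] by (simp add: pm_m[OF xm] pp_p[OF yp])
        show ?thesis using a2 unfolding a1 Y_add Z_add a3 by (simp only: add.assoc)
      qed
      have Ly: "pi y (pi x \<phi>) w = Yop ?ym (Yop ?xm \<phi>) w + (- Zop ?xp (Yop ?ym \<phi>) w + Hop (br ?ym ?xp) \<phi> w)
          + Zop ?yp (Yop ?xm \<phi>) w + Zop ?yp (Zop ?xp \<phi>) w"
      proof -
        have a1: "pi x \<phi> = (\<lambda>w. Yop ?xm \<phi> w + Zop ?xp \<phi> w)" by (rule pi_odd[OF pzx p])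
        have a2: "pi y (pi x \<phi>) w = Yop ?ym (pi x \<phi>) w + Zop ?yp (pi x \<phi>) w"
          using pi_odd[OF pzy Phi_pi[OF p, of x]] by simp
        have a3: "Yop ?ym (Zop ?xp \<phi>) w = - Zop ?xp (Yop ?ym \<phi>) w + Hop (br ?ym ?xp) \<phi> w"
          using fun_cong[OF YZ[of ?ym ?xp \<phi>], of w] by (simp add: pm_m[OF ym] pp_p[OF xp])
        show ?thesis using a2 unfolding a1 Y_add Z_add a3 by (simp only: add.assoc)
      qed
      have R2: "pi (br x y) \<phi> w = Hop (br ?xm ?yp) \<phi> w + Hop (br ?xp ?ym) \<phi> w"
        using pi_G0[OF bx0 p] bxy H_addp[OF p] by simp
      have yy: "Yop ?xm (Yop ?ym \<phi>) w = - Yop ?ym (Yop ?xm \<phi>) w" by (rule YY[OF xm ym p])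
      have zz: "Zop ?xp (Zop ?yp \<phi>) w = - Zop ?yp (Zop ?xp \<phi>) w"
        using ZZ[OF xp yp p] by metis
      have s: "ssign G0 x y = -1" using xn False by (simp add: ssign_def)
      show "pi x (pi y \<phi>) w = lcF (ssign G0 x y) (pi y (pi x \<phi>)) 1 (pi (br x y) \<phi>) w"
        unfolding lcF_apply s Lx Ly R2 yy zz an by (simp add: algebra_simps)
    qed
  qed
qed

definition act :: "'g list \<Rightarrow> ('g list \<Rightarrow> 'v) \<Rightarrow> 'g list \<Rightarrow> 'v" where
  "act u \<phi> = foldr pi u \<phi>"

lemma act_Nil[simp]: "act [] \<phi> = \<phi>" and act_Cons[simp]: "act (x # u) \<phi> = pi x (act u \<phi>)"
  by (simp_all add: act_def)

lemma act_append: "act (u @ v) \<phi> = act u (act v \<phi>)"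
  by (simp add: act_def)

lemma Phi_act: "Phi \<phi> \<Longrightarrow> Phi (act u \<phi>)"
  by (induction u) (simp_all add: Phi_pi)

lemma act_lc: "act u (lcF a \<phi> b \<psi>) = lcF a (act u \<phi>) b (act u \<psi>)"
  by (induction u) (simp_all add: pi_lc)

definition phi0 :: "'v \<Rightarrow> 'g list \<Rightarrow> 'v" where
  "phi0 v = (\<lambda>w. if w = [] then v else 0)"

lemma Phi_phi0: "Phi (phi0 v)"
  by (rule PhiI) (auto simp: phi0_def)

definition Fv :: "'v \<Rightarrow> 'g list \<Rightarrow> 'v" where
  "Fv v = (\<lambda>u. act u (phi0 v) [])"

lemma hU_Fv: "hU (Fv v)"
proof (rule hU_intro)
  fix u w x y
  let ?\<psi> = "act w (phi0 v)"
  have p: "Phi ?\<psi>" using Phi_act Phi_phi0 by blast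
  have "pi (x + y) ?\<psi> = lcF 1 (pi x ?\<psi>) 1 (pi y ?\<psi>)" using pi_param[OF p, of 1 x 1 y] by simp
  thus "Fv v (u @ [x + y] @ w) = Fv v (u @ [x] @ w) + Fv v (u @ [y] @ w)"
    by (simp add: Fv_def act_append act_lc lcF_apply)
next
  fix u w a x
  let ?\<psi> = "act w (phi0 v)"
  have p: "Phi ?\<psi>" using Phi_act Phi_phi0 by blast
  have "pi (sc a x) ?\<psi> = lcF a (pi x ?\<psi>) 0 (pi x ?\<psi>)" using pi_param[OF p, of a x 0 x] by simp
  thus "Fv v (u @ [sc a x] @ w) = scV a (Fv v (u @ [x] @ w))"
    by (simp add: Fv_def act_append act_lc lcF_apply)
next
  fix u w x y assume h: "hom x" "hom y"
  let ?\<psi> = "act w (phi0 v)"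
  have p: "Phi ?\<psi>" using Phi_act Phi_phi0 by blast
  show "Fv v (u @ [x, y] @ w) = scV (ssign G0 x y) (Fv v (u @ [y, x] @ w)) + Fv v (u @ [br x y] @ w)"
    using pi_rel[OF h p] by (simp add: Fv_def act_append act_lc lcF_apply)
qed

lemma act_front: "Phi \<psi> \<Longrightarrow> set p \<subseteq> G0 \<union> Gp \<Longrightarrow> act p \<psi> [] = wact G0 rho p (\<psi> [])"
proof (induction p)
  case Nil thus ?case by (simp add: wact_def)
next
  case (Cons x p)
  let ?\<chi> = "act p \<psi>"
  have c: "Phi ?\<chi>" using Phi_act Cons.prems by blast
  have IH: "?\<chi> [] = wact G0 rho p (\<psi> [])" using Cons by simp
  have e: "pi x ?\<chi> [] = ?\<chi> [pm x] + rho (pz x) (?\<chi> [])"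
    by (simp add: pi_def Yop_def)
  have w: "wact G0 rho (x # p) t = (if x \<in> G0 then rho x (wact G0 rho p t) else 0)" for t
    by (simp add: wact_def)
  have x: "x \<in> G0 \<or> x \<in> Gp" using Cons.prems by auto
  have pm0: "pm x = 0" using x pm_z pm_p by blast
  have z0: "?\<chi> [0] = 0" using Phi_0[OF c, of "[]" "[]"] by simp
  show ?case
  proof (cases "x \<in> G0")
    case True thus ?thesis using e IH pm0 z0 pz_z[OF True] w by simp
  next
    case False
    hence "pz x = 0" using x pz_p by blast
    thus ?thesis using e pm0 z0 False w rho_0 by simp
  qed
qed

lemma Fv_MM: "Fv v \<in> MM"
  unfolding MM_iff
proof (intro conjI allI impI)
  show "hU (Fv v)" by (rule hU_Fv)
  fix p u assume "set p \<subseteq> G0 \<union> Gp"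
  thus "Fv v (p @ u) = wact G0 rho p (Fv v u)"
    using act_front[OF Phi_act[OF Phi_phi0]] by (simp add: Fv_def act_append)
qed

lemma Fv_nil: "Fv v [] = v"
  by (simp add: Fv_def phi0_def)

lemma act_Gm: "set w \<subseteq> Gm \<Longrightarrow> Phi \<psi> \<Longrightarrow> act w \<psi> = (\<lambda>u. \<psi> (u @ w))"
proof (induction w arbitrary: \<psi>)
  case Nil thus ?case by simp
next
  case (Cons x w)
  have "act (x # w) \<psi> = Yop x (act w \<psi>)" using pi_Gm[OF _ Phi_act[OF Cons.prems(2)]] Cons.prems by simp
  thus ?case using Cons by (simp add: Yop_def)
qed

lemma Fv_Gm: "set w \<subseteq> Gm \<Longrightarrow> w \<noteq> [] \<Longrightarrow> Fv v w = 0"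
  using act_Gm[OF _ Phi_phi0] by (simp add: Fv_def phi0_def)

lemma exists_F: "\<exists>f \<in> MM. f [] = v \<and> (\<forall>w. set w \<subseteq> Gm \<longrightarrow> w \<noteq> [] \<longrightarrow> f w = 0)"
  using Fv_MM Fv_nil Fv_Gm by blast

end


context ctx begin

lemma move_c: assumes "hU f" "c \<in> Gm" "set w1 \<subseteq> Gm"
  shows "f (u @ [c] @ w1 @ r) = (if even (length w1) then f (u @ w1 @ [c] @ r) else - f (u @ w1 @ [c] @ r))"
  using assms(3)
proof (induction w1 arbitrary: u)
  case Nil thus ?case by simp
next
  case (Cons a w1)
  have am: "a \<in> Gm" and wm: "set w1 \<subseteq> Gm" using Cons.prems by auto
  have "f (u @ [c] @ (a # w1) @ r) = f (u @ [c, a] @ (w1 @ r))" by simp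
  also have "\<dots> = - f (u @ [a, c] @ (w1 @ r))" by (rule hU_rel_mm[OF assms(1,2) am])
  also have "\<dots> = - f ((u @ [a]) @ [c] @ w1 @ r)" by simp
  also have "\<dots> = - (if even (length w1) then f ((u @ [a]) @ w1 @ [c] @ r) else - f ((u @ [a]) @ w1 @ [c] @ r))"
    using Cons.IH[OF wm, of "u @ [a]"] by simp
  finally show ?case by simp
qed

lemma move_c0: assumes "hU f" "c \<in> Gm" "set w1 \<subseteq> Gm"
  shows "f (u @ w1 @ [c] @ r) = 0 \<longleftrightarrow> f (u @ [c] @ w1 @ r) = 0"
  using move_c[OF assms, of u r] by auto

lemma span_Gm: "C \<subseteq> Gm \<Longrightarrow> G.span C \<subseteq> Gm"
  using G.span_minimal subm by blast

lemma bound_aux: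
  assumes hU: "hU f" and fin: "finite C"
  shows "C \<subseteq> Gm \<longrightarrow> (\<forall>u v w. set w \<subseteq> G.span C \<longrightarrow> length w > card C \<longrightarrow> f (u @ w @ v) = 0)"
  using fin
proof (induction C rule: finite_induct)
  case empty
  show ?case
  proof (intro impI allI)
    fix u v w assume "set w \<subseteq> G.span {}" "length w > card {}"
    then obtain w' where "w = 0 # w'" by (cases w) auto
    thus "f (u @ w @ v) = 0" using hU_zero[OF hU, of u "w' @ v"] by simp
  qed
next
  case (insert c C)
  show ?case
  proof (intro impI)
    assume sub: "insert c C \<subseteq> Gm"
    have cm: "c \<in> Gm" and Cm: "C \<subseteq> Gm" using sub by auto
    have IHC: "\<And>u v w. set w \<subseteq> G.span C \<Longrightarrow> length w > card C \<Longrightarrow> f (u @ w @ v) = 0"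
      using insert.IH Cm by blast
    let ?S = "G.span C" and ?S' = "G.span (insert c C)"
    have SG: "?S \<subseteq> Gm" "?S' \<subseteq> Gm" using span_Gm Cm sub by auto
    have Q: "(\<forall>w1 u v. set w1 \<subseteq> ?S \<longrightarrow> set w2 \<subseteq> ?S' \<longrightarrow> length w1 + length w2 > card C + 1 \<longrightarrow> f (u @ w1 @ w2 @ v) = 0)
        \<and> (\<forall>w1 u v. set w1 \<subseteq> ?S \<longrightarrow> set w2 \<subseteq> ?S' \<longrightarrow> length w1 + length w2 > card C \<longrightarrow> f (u @ [c] @ w1 @ w2 @ v) = 0)"
      for w2
    proof (induction w2)
      case Nil
      show ?case
      proof (intro conjI allI impI)
        fix w1 u v assume "set w1 \<subseteq> ?S" "set [] \<subseteq> ?S'" "length w1 + length [] > card C + 1"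
        thus "f (u @ w1 @ [] @ v) = 0" using IHC by simp
      next
        fix w1 u v assume "set w1 \<subseteq> ?S" "set [] \<subseteq> ?S'" "length w1 + length [] > card C"
        thus "f (u @ [c] @ w1 @ [] @ v) = 0" using IHC[of w1 "u @ [c]" v] by simp
      qed
    next
      case (Cons y w2)
      show ?case
      proof (intro conjI allI impI)
        fix w1 u v assume a: "set w1 \<subseteq> ?S" "set (y # w2) \<subseteq> ?S'" "length w1 + length (y # w2) > card C + 1"
        obtain k where k: "y - sc k c \<in> ?S" using a(2) G.span_breakdown_eq by auto
        let ?y' = "y - sc k c"
        have ye: "y = sc k c + ?y'" by simp
        have e: "f (u @ w1 @ (y # w2) @ v) = scV k (f (u @ w1 @ [c] @ w2 @ v)) + f (u @ (w1 @ [?y']) @ w2 @ v)"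
          using hU_add[OF hU, of "u @ w1" "sc k c" ?y' "w2 @ v"] hU_sc[OF hU, of "u @ w1" k c "w2 @ v"] by simp
        have w1m: "set w1 \<subseteq> Gm" using a(1) SG by blast
        have "f (u @ [c] @ w1 @ w2 @ v) = 0" using Cons.IH a by auto
        hence z1: "f (u @ w1 @ [c] @ w2 @ v) = 0" using move_c0[OF hU cm w1m, of u "w2 @ v"] by simp
        have z2: "f (u @ (w1 @ [?y']) @ w2 @ v) = 0"
        proof -
          have "set (w1 @ [?y']) \<subseteq> ?S" "set w2 \<subseteq> ?S'" "length (w1 @ [?y']) + length w2 > card C + 1"
            using a k by auto
          thus ?thesis using conjunct1[OF Cons.IH] by blast
        qed
        show "f (u @ w1 @ (y # w2) @ v) = 0" using e z1 z2 by simp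
      next
        fix w1 u v assume a: "set w1 \<subseteq> ?S" "set (y # w2) \<subseteq> ?S'" "length w1 + length (y # w2) > card C"
        obtain k where k: "y - sc k c \<in> ?S" using a(2) G.span_breakdown_eq by auto
        let ?y' = "y - sc k c"
        have ye: "y = sc k c + ?y'" by simp
        have e: "f (u @ [c] @ w1 @ (y # w2) @ v) = scV k (f ((u @ [c]) @ w1 @ [c] @ w2 @ v)) + f (u @ [c] @ (w1 @ [?y']) @ w2 @ v)"
          using hU_add[OF hU, of "u @ [c] @ w1" "sc k c" ?y' "w2 @ v"] hU_sc[OF hU, of "u @ [c] @ w1" k c "w2 @ v"] by simp
        have w1m: "set w1 \<subseteq> Gm" using a(1) SG by blast
        have "f ((u @ [c]) @ [c] @ w1 @ w2 @ v) = 0" using hU_cc[OF hU cm, of u "w1 @ w2 @ v"] by simp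
        hence z1: "f ((u @ [c]) @ w1 @ [c] @ w2 @ v) = 0" using move_c0[OF hU cm w1m, of "u @ [c]" "w2 @ v"] by simp
        have z2: "f (u @ [c] @ (w1 @ [?y']) @ w2 @ v) = 0"
        proof -
          have "set (w1 @ [?y']) \<subseteq> ?S" "set w2 \<subseteq> ?S'" "length (w1 @ [?y']) + length w2 > card C"
            using a k by auto
          thus ?thesis using conjunct2[OF Cons.IH] by blast
        qed
        show "f (u @ [c] @ w1 @ (y # w2) @ v) = 0" using e z1 z2 by simp
      qed
    qed
    show "\<forall>u v w. set w \<subseteq> ?S' \<longrightarrow> card (insert c C) < length w \<longrightarrow> f (u @ w @ v) = 0"
    proof (intro allI impI)
      fix u v w assume "set w \<subseteq> ?S'" "card (insert c C) < length w"
      hence "set [] \<subseteq> ?S" "set w \<subseteq> ?S'" "length [] + length w > card C + 1" using insert.hyps by auto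
      thus "f (u @ w @ v) = 0" using conjunct1[OF Q[of w]] by (metis append_Nil)
    qed
  qed
qed

interpretation PM: module_hom sc sc pm
  by unfold_locales (simp_all add: proj_add proj_sc)

lemma Gm_span: "\<exists>C. finite C \<and> C \<subseteq> Gm \<and> Gm \<subseteq> G.span C"
proof -
  obtain B where B: "finite B" "Godd Gm Gp \<subseteq> G.span B" using FD by (auto simp: odd_part_finite_dim_def)
  have "Gm \<subseteq> G.span (pm ` B)"
  proof
    fix y assume y: "y \<in> Gm"
    have "y \<in> Godd Gm Gp" using y p0' unfolding Godd_def by (intro CollectI exI[of _ y] exI[of _ 0]) simp
    hence "y \<in> G.span B" using B by blast
    hence "pm y \<in> pm ` G.span B" by blast
    thus "y \<in> G.span (pm ` B)" using PM.span_image pm_m[OF y] by simp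
  qed
  moreover have "pm ` B \<subseteq> Gm" using proj_mem by auto
  ultimately show ?thesis using B by blast
qed

lemma bound: assumes "hU f" shows "\<exists>n. \<forall>w. set w \<subseteq> Gm \<longrightarrow> length w > n \<longrightarrow> f w = 0"
proof -
  obtain C where C: "finite C" "C \<subseteq> Gm" "Gm \<subseteq> G.span C" using Gm_span by blast
  have "\<forall>w. set w \<subseteq> Gm \<longrightarrow> length w > card C \<longrightarrow> f w = 0"
    using bound_aux[OF assms C(1)] C(2,3) by (metis append_Nil append_Nil2 subset_trans)
  thus ?thesis by blast
qed

end


context ctx begin

abbreviation SM where "SM N \<equiv> subsupermod Gm G0 Gp scV V0 V1 MM N"
abbreviation hp where "hp b f \<equiv> has_parity Gm G0 Gp V0 V1 b f"
definition Iinv where "Iinv = {f \<in> MM. \<forall>y\<in>Gm. gact y f = (\<lambda>_. 0)}"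

lemma Iinv_app: "f \<in> Iinv \<Longrightarrow> y \<in> Gm \<Longrightarrow> f (u @ [y]) = 0"
  unfolding Iinv_def gact_def by (metis (mono_tags, lifting) mem_Collect_eq)

lemma Iinv_MM: "f \<in> Iinv \<Longrightarrow> f \<in> MM" by (simp add: Iinv_def)

lemma Iinv_Gm: "f \<in> Iinv \<Longrightarrow> set w \<subseteq> Gm \<Longrightarrow> w \<noteq> [] \<Longrightarrow> f w = 0"
  by (cases w rule: rev_cases) (auto simp: Iinv_app)

lemma Iinv_intro:
  assumes "f \<in> MM" "\<forall>w. set w \<subseteq> Gm \<longrightarrow> w \<noteq> [] \<longrightarrow> f w = 0"
  shows "f \<in> Iinv"
  unfolding Iinv_def
proof (intro CollectI conjI ballI)
  show "f \<in> MM" by fact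
  fix y assume y: "y \<in> Gm"
  show "gact y f = (\<lambda>_. 0)"
    by (rule E_zero[OF MM_gact[OF assms(1)]]) (use assms(2) y in \<open>auto simp: gact_def\<close>)
qed

lemma Iinv_det: assumes "f \<in> Iinv" "g \<in> Iinv" "f [] = g []" shows "f = g"
proof (rule E[OF Iinv_MM[OF assms(1)] Iinv_MM[OF assms(2)]], intro allI impI)
  fix w assume "set w \<subseteq> Gm"
  thus "f w = g w" using assms Iinv_Gm[OF assms(1)] Iinv_Gm[OF assms(2)] by (cases "w = []") auto
qed

lemma zero_Iinv: "(\<lambda>_. 0) \<in> Iinv"
  by (rule Iinv_intro[OF MM_zero]) simp

lemma fsub_0: "fsubspace scV W \<Longrightarrow> (\<lambda>_. 0) \<in> W"
  and fsub_add: "fsubspace scV W \<Longrightarrow> f \<in> W \<Longrightarrow> g \<in> W \<Longrightarrow> (\<lambda>u. f u + g u) \<in> W"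
  and fsub_sc: "fsubspace scV W \<Longrightarrow> f \<in> W \<Longrightarrow> (\<lambda>u. scV a (f u)) \<in> W"
  by (auto simp: fsubspace_def)

lemma SM_sub: "SM N \<Longrightarrow> N \<subseteq> MM"
  and SM_fsub: "SM N \<Longrightarrow> fsubspace scV N"
  and SM_gact: "SM N \<Longrightarrow> f \<in> N \<Longrightarrow> gact x f \<in> N"
  and SM_grad: "SM N \<Longrightarrow> f \<in> N \<Longrightarrow> \<exists>f0 f1. f0 \<in> N \<and> f1 \<in> N \<and> hp False f0 \<and> hp True f1 \<and> f = (\<lambda>u. f0 u + f1 u)"
  by (auto simp: subsupermod_def)

lemma foldr_gact: "foldr gact w f u = f (u @ w)"
  by (induction w arbitrary: u) (auto simp: gact_def)

lemma SM_foldr: "SM N \<Longrightarrow> f \<in> N \<Longrightarrow> foldr gact w f \<in> N"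
  by (induction w) (auto intro: SM_gact)

lemma MM_plus: "f \<in> MM \<Longrightarrow> g \<in> MM \<Longrightarrow> (\<lambda>u. f u + g u) \<in> MM"
  using MM_lc[of f g 1 1] by (simp add: lcF_def)
lemma MM_scale: "f \<in> MM \<Longrightarrow> (\<lambda>u. scV a (f u)) \<in> MM"
  using MM_lc[of f f a 0] by (simp add: lcF_def)

lemma L4:
  assumes N: "SM N" "N \<noteq> {\<lambda>_. 0}"
  shows "\<exists>g\<in>N. g \<in> Iinv \<and> g [] \<noteq> 0"
proof -
  have z: "(\<lambda>_. 0) \<in> N" using fsub_0[OF SM_fsub[OF N(1)]] .
  obtain f where f: "f \<in> N" "f \<noteq> (\<lambda>_. 0)" using N(2) z by blast
  have fM: "f \<in> MM" using f SM_sub[OF N(1)] by blast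
  have ex: "\<exists>w. set w \<subseteq> Gm \<and> f w \<noteq> 0"
  proof (rule ccontr)
    assume "\<not> ?thesis"
    hence "f = (\<lambda>_. 0)" using E_zero[OF fM] by blast
    thus False using f by simp
  qed
  obtain n where n: "\<forall>w. set w \<subseteq> Gm \<longrightarrow> length w > n \<longrightarrow> f w = 0" using bound[OF MM_hU[OF fM]] by blast
  let ?K = "{k. \<exists>w. set w \<subseteq> Gm \<and> f w \<noteq> 0 \<and> length w = k}"
  have Kb: "?K \<subseteq> {..n}" using n by (auto simp: not_less[symmetric])
  have Kf: "finite ?K" using Kb finite_subset by blast
  have Kne: "?K \<noteq> {}" using ex by blast
  let ?m = "Max ?K"
  have "?m \<in> ?K" using Max_in[OF Kf Kne] .
  then obtain w0 where w0: "set w0 \<subseteq> Gm" "f w0 \<noteq> 0" "length w0 = ?m" by blast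
  let ?g = "foldr gact w0 f"
  have gN: "?g \<in> N" using SM_foldr[OF N(1) f(1)] .
  have gM: "?g \<in> MM" using gN SM_sub[OF N(1)] by blast
  have g0: "?g [] = f w0" by (simp add: foldr_gact)
  have "?g \<in> Iinv"
  proof (rule Iinv_intro[OF gM], intro allI impI)
    fix u assume u: "set u \<subseteq> Gm" "u \<noteq> []"
    show "?g u = 0"
    proof (rule ccontr)
      assume "?g u \<noteq> 0"
      hence "f (u @ w0) \<noteq> 0" by (simp add: foldr_gact)
      hence "length (u @ w0) \<in> ?K" using u w0 by (intro CollectI exI[of _ "u @ w0"]) auto
      hence "length (u @ w0) \<le> ?m" using Max_ge[OF Kf] by blast
      thus False using w0(3) u(2) by simp
    qed
  qed
  thus ?thesis using gN g0 w0(2) by auto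
qed

lemma sum0_V: "(a \<in> V0 \<and> b \<in> V1) \<or> (a \<in> V1 \<and> b \<in> V0) \<Longrightarrow> a + b = 0 \<Longrightarrow> a = 0 \<and> b = 0"
proof -
  assume h: "(a \<in> V0 \<and> b \<in> V1) \<or> (a \<in> V1 \<and> b \<in> V0)" "a + b = 0"
  have ab: "a = scV (-1) b" using h(2) by (simp add: eq_neg_iff_add_eq_0)
  have "a \<in> V0 \<and> a \<in> V1" using h(1) ab wsub_sc V0sub V1sub by metis
  hence "a = 0" using V01_int by blast
  thus ?thesis using h(2) by simp
qed

lemma hp_val: "hp b f \<Longrightarrow> \<forall>x\<in>set u. hom x \<Longrightarrow> f u \<in> (if word_odd G0 u = b then V0 else V1)"
  by (simp add: has_parity_def)

lemma Gm_homs: "set w \<subseteq> Gm \<Longrightarrow> \<forall>x\<in>set w. hom x"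
  using m_homog by blast

lemma L5:
  assumes N: "SM N" "N \<noteq> {\<lambda>_. 0}"
  shows "Iinv \<subseteq> N"
proof -
  note fs = SM_fsub[OF N(1)]
  define U where "U = (\<lambda>F. F []) ` (N \<inter> Iinv)"
  have plusI: "F \<in> N \<inter> Iinv \<Longrightarrow> G \<in> N \<inter> Iinv \<Longrightarrow> (\<lambda>u. F u + G u) \<in> N \<inter> Iinv" for F G
  proof -
    assume a: "F \<in> N \<inter> Iinv" "G \<in> N \<inter> Iinv"
    have "(\<lambda>u. F u + G u) \<in> Iinv"
    proof (rule Iinv_intro, intro MM_plus Iinv_MM, use a in auto)
      fix w assume "set w \<subseteq> Gm" "w \<noteq> []"
      thus "F w + G w = 0" using Iinv_Gm[of F w] Iinv_Gm[of G w] a by auto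
    qed
    thus ?thesis using fsub_add[OF fs] a by auto
  qed
  have scI: "F \<in> N \<inter> Iinv \<Longrightarrow> (\<lambda>u. scV c (F u)) \<in> N \<inter> Iinv" for F c
  proof -
    assume a: "F \<in> N \<inter> Iinv"
    have "(\<lambda>u. scV c (F u)) \<in> Iinv"
      by (rule Iinv_intro, intro MM_scale Iinv_MM, use a Iinv_Gm[of F] in auto)
    thus ?thesis using fsub_sc[OF fs] a by auto
  qed
  have sub: "W.subspace U"
    unfolding W.subspace_def U_def
  proof (intro conjI ballI allI)
    show "0 \<in> (\<lambda>F. F []) ` (N \<inter> Iinv)" using fsub_0[OF fs] zero_Iinv by force
  next
    fix x y assume "x \<in> (\<lambda>F. F []) ` (N \<inter> Iinv)" "y \<in> (\<lambda>F. F []) ` (N \<inter> Iinv)"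
    then obtain F G where "F \<in> N \<inter> Iinv" "G \<in> N \<inter> Iinv" "x = F []" "y = G []" by blast
    thus "x + y \<in> (\<lambda>F. F []) ` (N \<inter> Iinv)" using plusI by force
  next
    fix c x assume "x \<in> (\<lambda>F. F []) ` (N \<inter> Iinv)"
    then obtain F where "F \<in> N \<inter> Iinv" "x = F []" by blast
    thus "scV c x \<in> (\<lambda>F. F []) ` (N \<inter> Iinv)" using scI by force
  qed
  have rh: "\<forall>x\<in>G0. \<forall>w\<in>U. rho x w \<in> U"
  proof (intro ballI)
    fix x w assume x: "x \<in> G0" and "w \<in> U"
    then obtain F where F: "F \<in> N" "F \<in> Iinv" "w = F []" by (auto simp: U_def)
    have FM: "F \<in> MM" using Iinv_MM F(2) .
    have "gact x F \<in> Iinv"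
    proof (rule Iinv_intro[OF MM_gact[OF FM]], intro allI impI)
      fix u assume u: "set u \<subseteq> Gm" "u \<noteq> []"
      then obtain u' y where uu: "u = u' @ [y]" by (cases u rule: rev_cases) auto
      have y: "y \<in> Gm" using u uu by auto
      have "gact x F u = F (u' @ [y, x] @ [])" by (simp add: gact_def uu)
      also have "\<dots> = scV (ssign G0 y x) (F (u' @ [x, y] @ [])) + F (u' @ [br y x] @ [])"
        by (rule hU_rel[OF MM_hU[OF FM] m_homog[OF y] z_homog[OF x]])
      also have "\<dots> = 0"
        using Iinv_app[OF F(2) y, of "u' @ [x]"] Iinv_app[OF F(2) brm0[OF x y], of u'] by simp
      finally show "gact x F u = 0" .
    qed
    moreover have "gact x F \<in> N" using SM_gact[OF N(1) F(1)] .
    moreover have "gact x F [] = rho x w" using MM_front0[OF FM x, of "[]"] F(3) by (simp add: gact_def)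
    ultimately show "rho x w \<in> U" unfolding U_def by (intro image_eqI[where x="gact x F"]) auto
  qed
  have gr: "\<forall>w\<in>U. \<exists>a b. a \<in> U \<inter> V0 \<and> b \<in> U \<inter> V1 \<and> w = a + b"
  proof
    fix w assume "w \<in> U"
    then obtain F where F: "F \<in> N" "F \<in> Iinv" "w = F []" by (auto simp: U_def)
    obtain F0 F1 where d: "F0 \<in> N" "F1 \<in> N" "hp False F0" "hp True F1" "F = (\<lambda>u. F0 u + F1 u)"
      using SM_grad[OF N(1) F(1)] by blast
    have M01: "F0 \<in> MM" "F1 \<in> MM" using d SM_sub[OF N(1)] by auto
    have z: "F0 u = 0 \<and> F1 u = 0" if u: "set u \<subseteq> Gm" "u \<noteq> []" for u
    proof (rule sum0_V)
      have "F0 u \<in> (if word_odd G0 u = False then V0 else V1)" "F1 u \<in> (if word_odd G0 u = True then V0 else V1)"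
        using hp_val[OF d(3) Gm_homs[OF u(1)]] hp_val[OF d(4) Gm_homs[OF u(1)]] by auto
      thus "(F0 u \<in> V0 \<and> F1 u \<in> V1) \<or> (F0 u \<in> V1 \<and> F1 u \<in> V0)" by (cases "word_odd G0 u") auto
      show "F0 u + F1 u = 0" using Iinv_Gm[OF F(2) u] d(5) by metis
    qed
    have I0: "F0 \<in> Iinv" using Iinv_intro[OF M01(1)] z by blast
    have I1: "F1 \<in> Iinv" using Iinv_intro[OF M01(2)] z by blast
    have "F0 [] \<in> V0" "F1 [] \<in> V1" using hp_val[OF d(3), of "[]"] hp_val[OF d(4), of "[]"] by auto
    moreover have "F0 [] \<in> U" "F1 [] \<in> U" using I0 I1 d(1,2) by (auto simp: U_def)
    moreover have "w = F0 [] + F1 []" using F(3) d(5) by simp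
    ultimately show "\<exists>a b. a \<in> U \<inter> V0 \<and> b \<in> U \<inter> V1 \<and> w = a + b" by blast
  qed
  obtain g where g: "g \<in> N" "g \<in> Iinv" "g [] \<noteq> 0" using L4[OF N] by blast
  have "U \<noteq> {0}" using g unfolding U_def by force
  hence UU: "U = UNIV" using V_simple[OF sub rh gr] by blast
  show ?thesis
  proof
    fix F assume F: "F \<in> Iinv"
    have "F [] \<in> U" using UU by simp
    then obtain G where G: "G \<in> N" "G \<in> Iinv" "G [] = F []" by (auto simp: U_def)
    have "F = G" using Iinv_det[OF F G(2)] G(3) by simp
    thus "F \<in> N" using G(1) by simp
  qed
qed

lemma hp_zero: "hp b (\<lambda>_. 0)"
  using wsub_0[OF V0sub] wsub_0[OF V1sub] by (simp add: has_parity_def)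

lemma hp_plus: "hp c f \<Longrightarrow> hp c g \<Longrightarrow> hp c (\<lambda>u. f u + g u)"
  using parity_lc[of c f g 1 1] by (simp add: lcF_def)
lemma hp_scale: "hp c f \<Longrightarrow> hp c (\<lambda>u. scV a (f u))"
  using parity_lc[of c f f a 0] by (simp add: lcF_def)

lemma hp_gact_even: "x \<in> G0 \<Longrightarrow> hp c f \<Longrightarrow> hp c (gact x f)"
  using parity_gact[OF z_homog, of x c f] by simp

lemma hp_gact_odd: assumes "pz x = 0" "hU f" "hp c f" shows "hp (\<not> c) (gact x f)"
proof (cases "x \<in> G0")
  case True
  hence "x = 0" using odd_G0 assms(1) by blast
  hence "gact x f = (\<lambda>_. 0)" using hU_zero[OF assms(2), of _ "[]"] by (simp add: gact_def)
  thus ?thesis using hp_zero by simp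
next
  case False
  thus ?thesis using parity_gact[of x c f] assms by (simp add: homog_iff)
qed

lemma Fv_parity:
  assumes v: "v \<in> (if b then V1 else V0)"
  shows "hp b (Fv v)"
proof -
  let ?T0 = "if b then V1 else V0" and ?T1 = "if b then V0 else V1"
  have s0: "W.subspace ?T0" "W.subspace ?T1" using V0sub V1sub by auto
  have r: "\<forall>x\<in>G0. \<forall>w\<in>?T0. rho x w \<in> ?T0" "\<forall>x\<in>G0. \<forall>w\<in>?T1. rho x w \<in> ?T1"
    using rho_V0 rho_V1 by auto
  have base: "\<forall>w. set w \<subseteq> Gm \<longrightarrow> Fv v w \<in> (if word_odd G0 w then ?T1 else ?T0)"
  proof (intro allI impI)
    fix w assume w: "set w \<subseteq> Gm"
    show "Fv v w \<in> (if word_odd G0 w then ?T1 else ?T0)"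
    proof (cases "w = []")
      case True thus ?thesis using v Fv_nil by simp
    next
      case False thus ?thesis using Fv_Gm[OF w False] wsub_0 s0 by simp
    qed
  qed
  have nn: "(\<forall>x\<in>set u. hom x) \<longrightarrow> Fv v u \<in> (if word_odd G0 u then ?T1 else ?T0)" for u
    by (rule NO[OF Fv_MM s0 r base])
  show ?thesis unfolding has_parity_def
  proof (intro allI impI)
    fix u assume "\<forall>x\<in>set u. hom x"
    hence "Fv v u \<in> (if word_odd G0 u then ?T1 else ?T0)" using nn by blast
    thus "Fv v u \<in> (if word_odd G0 u = b then V0 else V1)" by (cases b; cases "word_odd G0 u") auto
  qed
qed

definition M' where
  "M' = {f \<in> MM. \<exists>f0 f1. f0 \<in> MM \<and> f1 \<in> MM \<and> hp False f0 \<and> hp True f1 \<and> f = (\<lambda>u. f0 u + f1 u)}"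

lemma M'_intro: "f0 \<in> MM \<Longrightarrow> f1 \<in> MM \<Longrightarrow> hp False f0 \<Longrightarrow> hp True f1 \<Longrightarrow> (\<lambda>u. f0 u + f1 u) \<in> M'"
  unfolding M'_def using MM_plus by blast

lemma SM_M': "SM M'"
  unfolding subsupermod_def
proof (intro conjI ballI allI)
  show "M' \<subseteq> MM" by (auto simp: M'_def)
  show "fsubspace scV M'"
    unfolding fsubspace_def
  proof (intro conjI ballI allI)
    show "(\<lambda>_. 0) \<in> M'" using M'_intro[OF MM_zero MM_zero hp_zero hp_zero] by simp
  next
    fix f g assume "f \<in> M'" "g \<in> M'"
    then obtain f0 f1 g0 g1 where d: "f0 \<in> MM" "f1 \<in> MM" "hp False f0" "hp True f1" "f = (\<lambda>u. f0 u + f1 u)"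
       "g0 \<in> MM" "g1 \<in> MM" "hp False g0" "hp True g1" "g = (\<lambda>u. g0 u + g1 u)" by (auto simp: M'_def)
    have "(\<lambda>u. (f0 u + g0 u) + (f1 u + g1 u)) \<in> M'"
      using M'_intro[OF MM_plus[OF d(1,6)] MM_plus[OF d(2,7)] hp_plus[OF d(3,8)] hp_plus[OF d(4,9)]] .
    thus "(\<lambda>u. f u + g u) \<in> M'" using d(5,10) by (simp add: add_ac)
  next
    fix a f assume "f \<in> M'"
    then obtain f0 f1 where d: "f0 \<in> MM" "f1 \<in> MM" "hp False f0" "hp True f1" "f = (\<lambda>u. f0 u + f1 u)"
      by (auto simp: M'_def)
    have "(\<lambda>u. scV a (f0 u) + scV a (f1 u)) \<in> M'"
      using M'_intro[OF MM_scale[OF d(1)] MM_scale[OF d(2)] hp_scale[OF d(3)] hp_scale[OF d(4)]] .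
    thus "(\<lambda>u. scV a (f u)) \<in> M'" using d(5) by (simp add: W.scale_right_distrib)
  qed
next
  fix x f assume "f \<in> M'"
  then obtain f0 f1 where d: "f0 \<in> MM" "f1 \<in> MM" "hp False f0" "hp True f1" "f = (\<lambda>u. f0 u + f1 u)"
    by (auto simp: M'_def)
  let ?e = "pz x" and ?o = "pm x + pp x"
  have xe: "x = ?e + ?o" using proj_sum[of x] by (simp add: algebra_simps)
  have e0: "?e \<in> G0" using proj_mem by blast
  have oo: "pz ?o = 0" by (simp add: proj_add)
  have hf: "hU f0" "hU f1" using d MM_hU by auto
  have split: "gact x h u = gact ?e h u + gact ?o h u" if "hU h" for h u
    using hU_add[OF that, of u ?e ?o "[]"] xe by (simp add: gact_def)
  have "(\<lambda>u. (gact ?e f0 u + gact ?o f1 u) + (gact ?e f1 u + gact ?o f0 u)) \<in> M'"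
    by (rule M'_intro[OF MM_plus[OF MM_gact[OF d(1)] MM_gact[OF d(2)]] MM_plus[OF MM_gact[OF d(2)] MM_gact[OF d(1)]]
        hp_plus[OF hp_gact_even[OF e0 d(3)] hp_gact_odd[OF oo hf(2) d(4), simplified]]
        hp_plus[OF hp_gact_even[OF e0 d(4)] hp_gact_odd[OF oo hf(1) d(3), simplified]]])
  moreover have "gact x f = (\<lambda>u. (gact ?e f0 u + gact ?o f1 u) + (gact ?e f1 u + gact ?o f0 u))"
  proof (rule ext)
    fix u
    have "gact x f u = gact x f0 u + gact x f1 u" using d(5) by (simp add: gact_def)
    thus "gact x f u = (gact ?e f0 u + gact ?o f1 u) + (gact ?e f1 u + gact ?o f0 u)"
      using split[OF hf(1), of u] split[OF hf(2), of u] by (simp add: add_ac)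
  qed
  ultimately show "gact x f \<in> M'" by simp
next
  fix f assume "f \<in> M'"
  then obtain f0 f1 where d: "f0 \<in> MM" "f1 \<in> MM" "hp False f0" "hp True f1" "f = (\<lambda>u. f0 u + f1 u)"
    by (auto simp: M'_def)
  have "f0 \<in> M'" using M'_intro[OF d(1) MM_zero d(3) hp_zero] by simp
  moreover have "f1 \<in> M'" using M'_intro[OF MM_zero d(2) hp_zero d(4)] by simp
  ultimately show "\<exists>f0 f1. f0 \<in> M' \<and> f1 \<in> M' \<and> hp False f0 \<and> hp True f1 \<and> f = (\<lambda>u. f0 u + f1 u)"
    using d by blast
qed

lemma M'_nonzero: "M' \<noteq> {\<lambda>_. 0}"
proof -
  obtain v :: 'v where v: "v \<noteq> 0" using V_nonzero by blast
  obtain p where p: "fst p \<in> V0" "snd p \<in> V1" "v = fst p + snd p" using decV[of v] by blast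
  show ?thesis
  proof (cases "fst p = 0")
    case False
    have "Fv (fst p) \<in> M'" using M'_intro[OF Fv_MM MM_zero Fv_parity[of "fst p" False] hp_zero] p by simp
    moreover have "Fv (fst p) \<noteq> (\<lambda>_. 0)" using Fv_nil[of "fst p"] False by metis
    ultimately show ?thesis by blast
  next
    case True
    hence s: "snd p \<noteq> 0" using p v by simp
    have "Fv (snd p) \<in> M'" using M'_intro[OF MM_zero Fv_MM hp_zero Fv_parity[of "snd p" True]] p by simp
    moreover have "Fv (snd p) \<noteq> (\<lambda>_. 0)" using Fv_nil[of "snd p"] s by metis
    ultimately show ?thesis by blast
  qed
qed

lemma Iinv_nonzero: "\<exists>f\<in>Iinv. f \<noteq> (\<lambda>_. 0)"
proof -
  obtain v :: 'v where v: "v \<noteq> 0" using V_nonzero by blast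
  have "Fv v \<in> Iinv" using Iinv_intro[OF Fv_MM] Fv_Gm by blast
  moreover have "Fv v \<noteq> (\<lambda>_. 0)" using Fv_nil[of v] v by metis
  ultimately show ?thesis by blast
qed

lemma uniq:
  assumes "f0 \<in> MM" "g0 \<in> MM" "f1 \<in> MM" "g1 \<in> MM" "hp False f0" "hp False g0" "hp True f1" "hp True g1"
    and eq: "\<And>u. f0 u + f1 u = g0 u + g1 u"
  shows "f0 = g0"
proof -
  let ?h = "lcF 1 f0 (-1) g0"
  have hh: "?h = (\<lambda>u. f0 u - g0 u)" by (simp add: lcF_def)
  have hU: "hU ?h" using hU_lc MM_hU assms(1,2) by blast
  have "\<forall>u. (\<forall>x\<in>set u. hom x) \<longrightarrow> ?h u = 0"
  proof (intro allI impI)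
    fix u assume u: "\<forall>x\<in>set u. hom x"
    have a: "f0 u \<in> (if word_odd G0 u = False then V0 else V1)" "g0 u \<in> (if word_odd G0 u = False then V0 else V1)"
      "f1 u \<in> (if word_odd G0 u = True then V0 else V1)" "g1 u \<in> (if word_odd G0 u = True then V0 else V1)"
      using hp_val[OF assms(5) u] hp_val[OF assms(6) u] hp_val[OF assms(7) u] hp_val[OF assms(8) u] by auto
    have d1: "f0 u - g0 u = g1 u - f1 u" using eq[of u] by (simp add: algebra_simps)
    have cl: "W.subspace S \<Longrightarrow> a \<in> S \<Longrightarrow> b \<in> S \<Longrightarrow> a - b \<in> S" for S a b
      using wsub_add[of S a "scV (-1) b"] wsub_sc[of S b "-1"] by simp
    have x1: "f0 u - g0 u \<in> (if word_odd G0 u = False then V0 else V1)"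
      using a(1,2) cl[OF V0sub] cl[OF V1sub] by (cases "word_odd G0 u") auto
    have x2: "g1 u - f1 u \<in> (if word_odd G0 u = True then V0 else V1)"
      using a(3,4) cl[OF V0sub] cl[OF V1sub] by (cases "word_odd G0 u") auto
    have "f0 u - g0 u \<in> V0 \<and> f0 u - g0 u \<in> V1"
      using x1 x2 d1 by (cases "word_odd G0 u") auto
    hence "f0 u - g0 u = 0" using V01_int by blast
    thus "?h u = 0" using hh by simp
  qed
  hence "?h u = 0" for u using NH[OF hU] by blast
  thus ?thesis using hh by (metis eq_iff_diff_eq_0 ext)
qed

definition Fam where "Fam = {N. SM N \<and> N \<noteq> {\<lambda>_. 0}}"
definition SS where "SS = \<Inter> Fam"

lemma M'_Fam: "M' \<in> Fam" using SM_M' M'_nonzero by (simp add: Fam_def)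

lemma Iinv_SS: "Iinv \<subseteq> SS"
  unfolding SS_def Fam_def using L5 by blast

lemma SS_nonzero: "SS \<noteq> {\<lambda>_. 0}"
  using Iinv_SS Iinv_nonzero by blast

lemma SS_SM: "SM SS"
  unfolding subsupermod_def
proof (intro conjI ballI allI)
  have sub: "SS \<subseteq> M'" using M'_Fam unfolding SS_def by blast
  thus "SS \<subseteq> MM" using SM_sub[OF SM_M'] by blast
  show "fsubspace scV SS"
    unfolding fsubspace_def SS_def
  proof (intro conjI ballI allI)
    show "(\<lambda>_. 0) \<in> \<Inter> Fam"
    proof (rule InterI)
      fix N assume "N \<in> Fam" thus "(\<lambda>_. 0) \<in> N" using fsub_0[OF SM_fsub] by (simp add: Fam_def)
    qed
  next
    fix f g assume a: "f \<in> \<Inter> Fam" "g \<in> \<Inter> Fam"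
    show "(\<lambda>u. f u + g u) \<in> \<Inter> Fam"
    proof (rule InterI)
      fix N assume N: "N \<in> Fam"
      hence "f \<in> N" "g \<in> N" using a by auto
      thus "(\<lambda>u. f u + g u) \<in> N" using fsub_add[OF SM_fsub] N by (simp add: Fam_def)
    qed
  next
    fix c f assume a: "f \<in> \<Inter> Fam"
    show "(\<lambda>u. scV c (f u)) \<in> \<Inter> Fam"
    proof (rule InterI)
      fix N assume N: "N \<in> Fam"
      hence "f \<in> N" using a by auto
      thus "(\<lambda>u. scV c (f u)) \<in> N" using fsub_sc[OF SM_fsub] N by (simp add: Fam_def)
    qed
  qed
next
  fix x f assume "f \<in> SS"
  thus "gact x f \<in> SS" unfolding SS_def Fam_def using SM_gact by blast
next
  fix f assume f: "f \<in> SS"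
  have sub: "SS \<subseteq> M'" using M'_Fam unfolding SS_def by blast
  obtain f0 f1 where d: "f0 \<in> M'" "f1 \<in> M'" "hp False f0" "hp True f1" "f = (\<lambda>u. f0 u + f1 u)"
    using SM_grad[OF SM_M'] f sub by blast
  have dM: "f0 \<in> MM" "f1 \<in> MM" using d SM_sub[OF SM_M'] by auto
  have "f0 \<in> N \<and> f1 \<in> N" if N: "N \<in> Fam" for N
  proof -
    have NS: "SM N" using N by (simp add: Fam_def)
    have fN: "f \<in> N" using f N unfolding SS_def by blast
    obtain g0 g1 where g: "g0 \<in> N" "g1 \<in> N" "hp False g0" "hp True g1" "f = (\<lambda>u. g0 u + g1 u)"
      using SM_grad[OF NS fN] by blast
    have gM: "g0 \<in> MM" "g1 \<in> MM" using g SM_sub[OF NS] by auto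
    have e: "f0 u + f1 u = g0 u + g1 u" for u using d(5) g(5) by metis
    have "f0 = g0" by (rule uniq[OF dM(1) gM(1) dM(2) gM(2) d(3) g(3) d(4) g(4) e])
    moreover have "f1 = g1" using e calculation by (metis add_left_imp_eq ext)
    ultimately show ?thesis using g by simp
  qed
  hence "f0 \<in> SS" "f1 \<in> SS" unfolding SS_def by auto
  thus "\<exists>f0 f1. f0 \<in> SS \<and> f1 \<in> SS \<and> hp False f0 \<and> hp True f1 \<and> f = (\<lambda>u. f0 u + f1 u)"
    using d by blast
qed

lemma SS_simple: "simple_subsupermod Gm G0 Gp scV V0 V1 MM SS"
  unfolding simple_subsupermod_def
proof (intro conjI allI impI)
  show "SM SS" by (rule SS_SM)
  show "SS \<noteq> {\<lambda>_. 0}" by (rule SS_nonzero)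
  fix W assume W: "SM W \<and> W \<subseteq> SS"
  show "W = {\<lambda>_. 0} \<or> W = SS"
  proof (cases "W = {\<lambda>_. 0}")
    case False
    hence "W \<in> Fam" using W by (simp add: Fam_def)
    hence "SS \<subseteq> W" unfolding SS_def by blast
    thus ?thesis using W by blast
  qed simp
qed

lemma main_Gp: "has_simple_socle Gm G0 Gp scV V0 V1 MM"
proof -
  have simples: "{S. simple_subsupermod Gm G0 Gp scV V0 V1 MM S} = {SS}"
  proof (intro equalityI subsetI)
    fix T assume "T \<in> {S. simple_subsupermod Gm G0 Gp scV V0 V1 MM S}"
    hence T: "SM T" "T \<noteq> {\<lambda>_. 0}" "\<And>W. SM W \<and> W \<subseteq> T \<Longrightarrow> W = {\<lambda>_. 0} \<or> W = T"
      by (auto simp: simple_subsupermod_def)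
    hence "T \<in> Fam" by (simp add: Fam_def)
    hence "SS \<subseteq> T" unfolding SS_def by blast
    hence "SS = T" using T(3)[of SS] SS_SM SS_nonzero by blast
    thus "T \<in> {SS}" by simp
  next
    fix T assume "T \<in> {SS}"
    thus "T \<in> {S. simple_subsupermod Gm G0 Gp scV V0 V1 MM S}" using SS_simple by simp
  qed
  have fs: "fsubspace scV SS" using SM_fsub[OF SS_SM] .
  have "socle Gm G0 Gp scV V0 V1 MM = SS"
    unfolding socle_def simples fspan_def using fs by auto
  thus ?thesis using SS_simple by (simp add: has_simple_socle_def)
qed

end


lemma Godd_sym: "Godd Gm Gp = Godd Gp Gm"
  unfolding Godd_def by (auto, metis add.commute, metis add.commute)

lemma homog_sym: "homog G0 Gm Gp = homog G0 Gp Gm"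
  by (rule ext) (simp add: homog_def Godd_sym)

lemma dec_sym:
  assumes "\<forall>x. \<exists>!t. fst t \<in> Gm \<and> fst (snd t) \<in> G0 \<and> snd (snd t) \<in> Gp \<and>
              x = fst t + fst (snd t) + snd (snd t)"
  shows "\<forall>x. \<exists>!t. fst t \<in> Gp \<and> fst (snd t) \<in> G0 \<and> snd (snd t) \<in> Gm \<and>
              (x::'g::ab_group_add) = fst t + fst (snd t) + snd (snd t)"
proof
  fix x
  obtain a b c where abc: "a \<in> Gm" "b \<in> G0" "c \<in> Gp" "x = a + b + c"
    and un: "\<And>a' b' c'. a' \<in> Gm \<Longrightarrow> b' \<in> G0 \<Longrightarrow> c' \<in> Gp \<Longrightarrow> x = a' + b' + c' \<Longrightarrow> (a', b', c') = (a, b, c)"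
  proof -
    from assms obtain t where t: "fst t \<in> Gm \<and> fst (snd t) \<in> G0 \<and> snd (snd t) \<in> Gp \<and>
              x = fst t + fst (snd t) + snd (snd t)"
      and u: "\<And>s. fst s \<in> Gm \<and> fst (snd s) \<in> G0 \<and> snd (snd s) \<in> Gp \<and>
              x = fst s + fst (snd s) + snd (snd s) \<Longrightarrow> s = t" by blast
    show ?thesis
    proof (rule that[of "fst t" "fst (snd t)" "snd (snd t)"])
      show "fst t \<in> Gm" "fst (snd t) \<in> G0" "snd (snd t) \<in> Gp" "x = fst t + fst (snd t) + snd (snd t)" using t by auto
      fix a' b' c' assume "a' \<in> Gm" "b' \<in> G0" "c' \<in> Gp" "x = a' + b' + c'"
      hence "(a', b', c') = t" using u[of "(a', b', c')"] by simp
      thus "(a', b', c') = (fst t, fst (snd t), snd (snd t))" by auto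
    qed
  qed
  show "\<exists>!t. fst t \<in> Gp \<and> fst (snd t) \<in> G0 \<and> snd (snd t) \<in> Gm \<and> x = fst t + fst (snd t) + snd (snd t)"
  proof (rule ex1I[of _ "(c, b, a)"])
    show "fst (c, b, a) \<in> Gp \<and> fst (snd (c, b, a)) \<in> G0 \<and> snd (snd (c, b, a)) \<in> Gm \<and>
        x = fst (c, b, a) + fst (snd (c, b, a)) + snd (snd (c, b, a))" using abc by (simp add: add_ac)
    fix s assume s: "fst s \<in> Gp \<and> fst (snd s) \<in> G0 \<and> snd (snd s) \<in> Gm \<and> x = fst s + fst (snd s) + snd (snd s)"
    hence "(snd (snd s), fst (snd s), fst s) = (a, b, c)" using un[of "snd (snd s)" "fst (snd s)" "fst s"] by (simp add: add_ac)
    thus "s = (c, b, a)" by (cases s) auto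
  qed
qed

lemma Zg_sym: assumes Z0: "Zgraded_lie_superalgebra sc br Gm G0 Gp" shows "Zgraded_lie_superalgebra sc br Gp G0 Gm"
proof -
  note Z = Z0[unfolded Zgraded_lie_superalgebra_def homog_sym[of G0 Gm Gp]]
  show ?thesis unfolding Zgraded_lie_superalgebra_def
    apply (intro conjI)
    apply (rule Z[THEN conjunct1])
    apply (rule Z[THEN conjunct2, THEN conjunct2, THEN conjunct2, THEN conjunct1])
    apply (rule Z[THEN conjunct2, THEN conjunct2, THEN conjunct1])
    apply (rule Z[THEN conjunct2, THEN conjunct1])
    apply (rule dec_sym[OF Z[THEN conjunct2, THEN conjunct2, THEN conjunct2, THEN conjunct2, THEN conjunct1]])
    apply (rule Z[THEN conjunct2, THEN conjunct2, THEN conjunct2, THEN conjunct2, THEN conjunct2, THEN conjunct1])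
    apply (rule Z[THEN conjunct2, THEN conjunct2, THEN conjunct2, THEN conjunct2, THEN conjunct2, THEN conjunct2, THEN conjunct1])
    apply (rule Z[THEN conjunct2, THEN conjunct2, THEN conjunct2, THEN conjunct2, THEN conjunct2, THEN conjunct2, THEN conjunct2, THEN conjunct1])
    apply (rule Z[THEN conjunct2, THEN conjunct2, THEN conjunct2, THEN conjunct2, THEN conjunct2, THEN conjunct2, THEN conjunct2, THEN conjunct2, THEN conjunct1])
    apply (rule Z[THEN conjunct2, THEN conjunct2, THEN conjunct2, THEN conjunct2, THEN conjunct2, THEN conjunct2, THEN conjunct2, THEN conjunct2, THEN conjunct2, THEN conjunct1])
    apply (rule Z[THEN conjunct2, THEN conjunct2, THEN conjunct2, THEN conjunct2, THEN conjunct2, THEN conjunct2, THEN conjunct2, THEN conjunct2, THEN conjunct2, THEN conjunct2, THEN conjunct2, THEN conjunct1])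
    apply (rule Z[THEN conjunct2, THEN conjunct2, THEN conjunct2, THEN conjunct2, THEN conjunct2, THEN conjunct2, THEN conjunct2, THEN conjunct2, THEN conjunct2, THEN conjunct2, THEN conjunct1])
    using Z[THEN conjunct2, THEN conjunct2, THEN conjunct2, THEN conjunct2, THEN conjunct2, THEN conjunct2, THEN conjunct2, THEN conjunct2, THEN conjunct2, THEN conjunct2, THEN conjunct2, THEN conjunct2, THEN conjunct1] apply blast
    apply (rule Z[THEN conjunct2, THEN conjunct2, THEN conjunct2, THEN conjunct2, THEN conjunct2, THEN conjunct2, THEN conjunct2, THEN conjunct2, THEN conjunct2, THEN conjunct2, THEN conjunct2, THEN conjunct2, THEN conjunct2, THEN conjunct2, THEN conjunct1])
    apply (rule Z[THEN conjunct2, THEN conjunct2, THEN conjunct2, THEN conjunct2, THEN conjunct2, THEN conjunct2, THEN conjunct2, THEN conjunct2, THEN conjunct2, THEN conjunct2, THEN conjunct2, THEN conjunct2, THEN conjunct2, THEN conjunct1])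
    apply (rule Z[THEN conjunct2, THEN conjunct2, THEN conjunct2, THEN conjunct2, THEN conjunct2, THEN conjunct2, THEN conjunct2, THEN conjunct2, THEN conjunct2, THEN conjunct2, THEN conjunct2, THEN conjunct2, THEN conjunct2, THEN conjunct2, THEN conjunct2, THEN conjunct1])
    apply (rule Z[THEN conjunct2, THEN conjunct2, THEN conjunct2, THEN conjunct2, THEN conjunct2, THEN conjunct2, THEN conjunct2, THEN conjunct2, THEN conjunct2, THEN conjunct2, THEN conjunct2, THEN conjunct2, THEN conjunct2, THEN conjunct2, THEN conjunct2, THEN conjunct2])
    done
qed

lemma ofd_sym: "odd_part_finite_dim sc Gm Gp = odd_part_finite_dim sc Gp Gm"
  by (simp add: odd_part_finite_dim_def Godd_sym)

lemma hom_Ug_sym: "hom_Ug sc br Gm G0 Gp = hom_Ug sc br Gp G0 Gm"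
  by (intro ext) (simp only: hom_Ug_def homog_sym[of G0 Gm Gp])

lemma Coind_sym: "Coind sc br Gm G0 Gp scV rho K = Coind sc br Gp G0 Gm scV rho K"
  by (simp only: Coind_def hom_Ug_sym[of sc br Gm G0 Gp])

lemma has_parity_sym: "has_parity Gm G0 Gp = has_parity Gp G0 Gm"
  by (intro ext) (simp only: has_parity_def homog_sym[of G0 Gm Gp])

lemma subsupermod_sym: "subsupermod Gm G0 Gp = subsupermod Gp G0 Gm"
  by (intro ext) (simp only: subsupermod_def has_parity_sym[of Gm G0 Gp])

lemma simple_subsupermod_sym: "simple_subsupermod Gm G0 Gp = simple_subsupermod Gp G0 Gm"
  by (intro ext) (simp only: simple_subsupermod_def subsupermod_sym[of Gm G0 Gp])

lemma has_simple_socle_sym: "has_simple_socle Gm G0 Gp = has_simple_socle Gp G0 Gm"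
  by (intro ext) (simp only: has_simple_socle_def socle_def simple_subsupermod_sym[of Gm G0 Gp])

theorem corollary3p6:
  fixes sc :: "complex \<Rightarrow> 'g::ab_group_add \<Rightarrow> 'g" and br :: "'g \<Rightarrow> 'g \<Rightarrow> 'g"
    and Gm G0 Gp :: "'g set"
    and scV :: "complex \<Rightarrow> 'v::ab_group_add \<Rightarrow> 'v" and V0 V1 :: "'v set"
    and rho :: "'g \<Rightarrow> 'v \<Rightarrow> 'v"
  assumes "Zgraded_lie_superalgebra sc br Gm G0 Gp"
    and "odd_part_finite_dim sc Gm Gp"
    and "simple_g0_supermodule sc br G0 scV V0 V1 rho"
  shows "has_simple_socle Gm G0 Gp scV V0 V1 (Coind sc br Gm G0 Gp scV rho Gp) \<and>
         has_simple_socle Gm G0 Gp scV V0 V1 (Coind sc br Gm G0 Gp scV rho Gm)"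
proof
  interpret A: ctx sc br Gm G0 Gp scV V0 V1 rho
    using assms by unfold_locales
  show "has_simple_socle Gm G0 Gp scV V0 V1 (Coind sc br Gm G0 Gp scV rho Gp)"
    by (rule A.main_Gp)
next
  interpret B: ctx sc br Gp G0 Gm scV V0 V1 rho
    using Zg_sym[OF assms(1)] assms(2,3) ofd_sym[of sc Gm Gp] by unfold_locales auto
  have "has_simple_socle Gp G0 Gm scV V0 V1 (Coind sc br Gp G0 Gm scV rho Gm)"
    by (rule B.main_Gp)
  thus "has_simple_socle Gm G0 Gp scV V0 V1 (Coind sc br Gm G0 Gp scV rho Gm)"
    by (simp only: has_simple_socle_sym[of Gm G0 Gp] Coind_sym[of sc br Gm G0 Gp])
qed

end
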